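(* Let $A\in\mathbb{R}^{M\times N}$ be a deterministic matrix with $m$th row $a_m^T$. Let $x\sim\mathcal{N}(0_{N\times1},\sigma_x^2I_N)$, $e^z\sim\mathcal{N}(0_{M\times1},C_{e^z})$, and $e^y\sim\mathcal{N}(\bar e^y,C_{e^y})$ be real Gaussian vectors, with $x,e^z,e^y$ independent. Let $y=(Ax+e^z)^2+e^y\in\mathbb{R}^M$ (entrywise square), and use the identity preprocessing $\mathcal{T}(y)=y$. Define $$C_z=\sigma_x^2AA^T+C_{e^z},\quad\bar y=\mathrm{diag}(C_z)+\bar e^y,\quad T=2C_z\odot C_z+C_{e^y},$$ assume $T$ is invertible, let $t\in\mathbb{R}^M$ solve $Tt=y-\bar y$, and let $V_m=2\sigma_x^4a_ma_m^T$, $m=1,\dots,M$. Then the matrix of the form $W_0+\sum_{m=1}^My_mW_m$ ($W_m\in\mathbb{R}^{N\times N}$) minimizing $\mathbb{E}[\|W_0+\sum_my_mW_m-xx^T\|_F^2]$ is $$D_y^{\mathbb{R}}=\sigma_x^2I_N+\sum_{m=1}^Mt_mV_m,$$ and its spectral MSE is $$\mathbb{E}\big[\|D^{\mathbb{R}}_y-xx^T\|_F^2\big]=\mathbb{E}\big[\|xx^T-\sigma_x^2I_N\|_F^2\big]-\sum_{m=1}^M\sum_{m'=1}^M[T^{-1}]_{m,m'}\mathrm{tr}\big(V_m^TV_{m'}\big).$$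
   Context: $\odot$ is the entrywise product and $\mathrm{diag}(C)$ the vector of diagonal entries. Expectations are over $x,e^z,e^y$. The linear spectral estimate is a scaled leading eigenvector of $D_y^{\mathbb{R}}$. *)

theory Defs
  imports "HOL-Probability.Probability"
begin

definition real_gaussian :: "'s measure \<Rightarrow> ('s \<Rightarrow> real) \<Rightarrow> real \<Rightarrow> real \<Rightarrow> bool" where
  "real_gaussian M Y mu v \<longleftrightarrow>
     Y \<in> borel_measurable M \<and>
     ((v = 0 \<and> (AE \<omega> in M. Y \<omega> = mu)) \<or>
      (v > 0 \<and> distributed M lborel Y (normal_density mu (sqrt v))))"

definition gaussian_vec :: "'s measure \<Rightarrow> ('s \<Rightarrow> real^'k) \<Rightarrow> real^'k \<Rightarrow> real^'k^'k \<Rightarrow> bool" where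
  "gaussian_vec M X mu C \<longleftrightarrow>
     X \<in> borel_measurable M \<and> transpose C = C \<and>
     (\<forall>u. real_gaussian M (\<lambda>\<omega>. u \<bullet> X \<omega>) (u \<bullet> mu) (u \<bullet> (C *v u)))"

definition indep3 :: "'s measure \<Rightarrow> ('s \<Rightarrow> 'a::topological_space) \<Rightarrow> ('s \<Rightarrow> 'b::topological_space)
                      \<Rightarrow> ('s \<Rightarrow> 'c::topological_space) \<Rightarrow> bool" where
  "indep3 M X Y Z \<longleftrightarrow>
     (\<forall>A\<in>sets borel. \<forall>B\<in>sets borel. \<forall>C\<in>sets borel.
        measure M {\<omega>\<in>space M. X \<omega> \<in> A \<and> Y \<omega> \<in> B \<and> Z \<omega> \<in> C}
        = measure M {\<omega>\<in>space M. X \<omega> \<in> A} * measure M {\<omega>\<in>space M. Y \<omega> \<in> B}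
          * measure M {\<omega>\<in>space M. Z \<omega> \<in> C})"

definition outer :: "real^'k \<Rightarrow> real^'l \<Rightarrow> real^'l^'k" where
  "outer a b = (\<chi> i j. a $ i * b $ j)"

definition frob_sq :: "real^'l^'k \<Rightarrow> real" where
  "frob_sq B = (\<Sum>i\<in>UNIV. \<Sum>j\<in>UNIV. (B $ i $ j)^2)"

end

theory Submission
  imports Defs
begin

lemma absb: "norm ((a::real) * b) \<le> norm (a^2 + b^2)"
proof -
  have "0 \<le> (\<bar>a\<bar> - \<bar>b\<bar>)^2" by simp
  moreover have "(\<bar>a\<bar> - \<bar>b\<bar>)^2 = a^2 + b^2 - 2 * \<bar>a * b\<bar>"
    by (simp add: power2_diff abs_mult)
  moreover have "0 \<le> \<bar>a * b\<bar>" by simp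
  moreover have "norm (a^2 + b^2) = a^2 + b^2" by simp
  ultimately show ?thesis by simp
qed

context prob_space begin

definition L2 :: "('a \<Rightarrow> real) \<Rightarrow> bool" where
  "L2 X \<longleftrightarrow> X \<in> borel_measurable M \<and> integrable M (\<lambda>\<omega>. (X \<omega>)^2)"

lemma L2_meas: "L2 X \<Longrightarrow> X \<in> borel_measurable M"
  by (simp add: L2_def)

lemma L2_mult: assumes "L2 X" "L2 Y" shows "integrable M (\<lambda>\<omega>. X \<omega> * Y \<omega>)"
proof (rule Bochner_Integration.integrable_bound)
  show "integrable M (\<lambda>\<omega>. (X \<omega>)^2 + (Y \<omega>)^2)"
    using assms by (auto simp: L2_def)
  show "(\<lambda>\<omega>. X \<omega> * Y \<omega>) \<in> borel_measurable M"
    using assms by (auto simp: L2_def)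
  show "AE \<omega> in M. norm (X \<omega> * Y \<omega>) \<le> norm ((X \<omega>)^2 + (Y \<omega>)^2)"
    by (rule AE_I2) (rule absb)
qed

lemma L2_const[simp]: "L2 (\<lambda>_. c)"
  by (simp add: L2_def)

lemma L2_integrable: "L2 X \<Longrightarrow> integrable M X"
  using L2_mult[of X "\<lambda>_. 1"] by simp

lemma L2_add: assumes "L2 X" "L2 Y" shows "L2 (\<lambda>\<omega>. X \<omega> + Y \<omega>)"
proof -
  have m: "X \<in> borel_measurable M" "Y \<in> borel_measurable M" using assms by (auto simp: L2_def)
  have "integrable M (\<lambda>\<omega>. (X \<omega>)^2 + (Y \<omega>)^2 + 2 * (X \<omega> * Y \<omega>))"
    using assms L2_mult[OF assms] by (auto simp: L2_def)
  moreover have "(\<lambda>\<omega>. (X \<omega> + Y \<omega>)^2) = (\<lambda>\<omega>. (X \<omega>)^2 + (Y \<omega>)^2 + 2 * (X \<omega> * Y \<omega>))"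
    by (simp add: power2_sum algebra_simps)
  ultimately show ?thesis using m by (simp add: L2_def)
qed

lemma L2_cmult: assumes "L2 X" shows "L2 (\<lambda>\<omega>. c * X \<omega>)"
proof -
  have "(\<lambda>\<omega>. (c * X \<omega>)^2) = (\<lambda>\<omega>. c^2 * (X \<omega>)^2)" by (simp add: power_mult_distrib)
  then show ?thesis using assms by (simp add: L2_def borel_measurable_times)
qed

lemma L2_cmult2: assumes "L2 X" shows "L2 (\<lambda>\<omega>. X \<omega> * c)"
  using L2_cmult[OF assms, of c] by (simp add: mult.commute)

lemma L2_minus: assumes "L2 X" shows "L2 (\<lambda>\<omega>. - X \<omega>)"
  using L2_cmult[OF assms, of "-1"] by simp

lemma L2_diff: assumes "L2 X" "L2 Y" shows "L2 (\<lambda>\<omega>. X \<omega> - Y \<omega>)"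
  using L2_add[OF assms(1) L2_minus[OF assms(2)]] by simp

lemma L2_sum: assumes "finite I" "\<And>i. i \<in> I \<Longrightarrow> L2 (X i)" shows "L2 (\<lambda>\<omega>. \<Sum>i\<in>I. X i \<omega>)"
  using assms by (induction I rule: finite_induct) (auto intro: L2_add)

lemma L2_sq: assumes "X \<in> borel_measurable M" "integrable M (\<lambda>\<omega>. (X \<omega>)^4)" shows "L2 (\<lambda>\<omega>. (X \<omega>)^2)"
  using assms by (simp add: L2_def flip: power_mult)

lemma exp_lin:
  assumes "L2 G" "L2 Z0" "finite I" "\<And>m. m \<in> I \<Longrightarrow> L2 (Z m)"
  shows "expectation (\<lambda>\<omega>. G \<omega> * (Z0 \<omega> + (\<Sum>m\<in>I. a m * Z m \<omega>)))
     = expectation (\<lambda>\<omega>. G \<omega> * Z0 \<omega>) + (\<Sum>m\<in>I. a m * expectation (\<lambda>\<omega>. G \<omega> * Z m \<omega>))"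
proof -
  have e: "(\<lambda>\<omega>. G \<omega> * (Z0 \<omega> + (\<Sum>m\<in>I. a m * Z m \<omega>))) =
        (\<lambda>\<omega>. G \<omega> * Z0 \<omega> + (\<Sum>m\<in>I. a m * (G \<omega> * Z m \<omega>)))"
    by (simp add: distrib_left sum_distrib_left mult.left_commute)
  have i1: "integrable M (\<lambda>\<omega>. G \<omega> * Z0 \<omega>)" by (rule L2_mult[OF assms(1,2)])
  have i2: "\<And>m. m \<in> I \<Longrightarrow> integrable M (\<lambda>\<omega>. a m * (G \<omega> * Z m \<omega>))"
    using L2_mult[OF assms(1) assms(4)] by simp
  have i3: "integrable M (\<lambda>\<omega>. \<Sum>m\<in>I. a m * (G \<omega> * Z m \<omega>))"
    using i2 by (rule Bochner_Integration.integrable_sum)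
  have "expectation (\<lambda>\<omega>. G \<omega> * Z0 \<omega> + (\<Sum>m\<in>I. a m * (G \<omega> * Z m \<omega>)))
      = expectation (\<lambda>\<omega>. G \<omega> * Z0 \<omega>) + expectation (\<lambda>\<omega>. \<Sum>m\<in>I. a m * (G \<omega> * Z m \<omega>))"
    using i1 i3 by (rule Bochner_Integration.integral_add)
  also have "expectation (\<lambda>\<omega>. \<Sum>m\<in>I. a m * (G \<omega> * Z m \<omega>)) = (\<Sum>m\<in>I. expectation (\<lambda>\<omega>. a m * (G \<omega> * Z m \<omega>)))"
    using i2 by (rule Bochner_Integration.integral_sum)
  also have "\<dots> = (\<Sum>m\<in>I. a m * expectation (\<lambda>\<omega>. G \<omega> * Z m \<omega>))"
    by simp
  finally show ?thesis using e by simp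
qed

end

lemma frob_sq_nonneg: "0 \<le> frob_sq B"
  unfolding frob_sq_def by (intro sum_nonneg) auto

lemma frob_sq_eq_0: "frob_sq B = 0 \<Longrightarrow> B = 0"
proof -
  assume h: "frob_sq B = 0"
  have "\<forall>i\<in>UNIV. (\<Sum>j\<in>UNIV. (B $ i $ j)^2) = 0"
    using h unfolding frob_sq_def
    by (subst sum_nonneg_eq_0_iff[symmetric]) (auto intro: sum_nonneg)
  then have "\<And>i j. (B $ i $ j)^2 = 0"
    by (subst (asm) sum_nonneg_eq_0_iff) auto
  then show "B = 0" by (simp add: vec_eq_iff)
qed

lemma inv_prop: assumes "invertible (T::real^'m^'m)"
  shows "matrix_inv T ** T = mat 1"
  using someI_ex[OF assms[unfolded invertible_def]] unfolding matrix_inv_def by simp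

lemma inv_comp: assumes "invertible (T::real^'m^'m)"
  shows "(\<Sum>k\<in>UNIV. matrix_inv T $ m $ k * T $ k $ l) = (if m = l then 1 else 0)"
proof -
  have "(matrix_inv T ** T) $ m $ l = mat 1 $ m $ l" using inv_prop[OF assms] by simp
  then show ?thesis by (simp add: matrix_matrix_mult_def mat_def)
qed

lemma tr: "trace (transpose (A::real^'n^'n) ** B) = (\<Sum>i\<in>UNIV. \<Sum>j\<in>UNIV. A $ i $ j * B $ i $ j)"
proof -
  have "trace (transpose (A::real^'n^'n) ** B) = (\<Sum>j\<in>UNIV. \<Sum>i\<in>UNIV. A $ i $ j * B $ i $ j)"
    by (simp add: trace_def matrix_matrix_mult_def transpose_def)
  also have "\<dots> = (\<Sum>i\<in>UNIV. \<Sum>j\<in>UNIV. A $ i $ j * B $ i $ j)" by (rule sum.swap)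
  finally show ?thesis .
qed
lemma sw: "(\<Sum>i\<in>UNIV. \<Sum>j\<in>UNIV. \<Sum>m\<in>UNIV. (V::'m::finite\<Rightarrow>real^'n^'n) m $ i $ j * (\<Sum>k\<in>UNIV. R $ m $ k * V k $ i $ j))
   = (\<Sum>m\<in>UNIV. \<Sum>k\<in>UNIV. R $ m $ k * (\<Sum>i\<in>UNIV. \<Sum>j\<in>UNIV. V m $ i $ j * V k $ i $ j))"
proof -
  have "(\<Sum>i\<in>UNIV. \<Sum>j\<in>UNIV. \<Sum>m\<in>UNIV. V m $ i $ j * (\<Sum>k\<in>UNIV. R $ m $ k * V k $ i $ j))
    = (\<Sum>i\<in>UNIV. \<Sum>j\<in>UNIV. \<Sum>m\<in>UNIV. \<Sum>k\<in>UNIV. R $ m $ k * (V m $ i $ j * V k $ i $ j))"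
    by (simp add: sum_distrib_left mult_ac)
  also have "\<dots> = (\<Sum>i\<in>UNIV. \<Sum>m\<in>UNIV. \<Sum>j\<in>UNIV. \<Sum>k\<in>UNIV. R $ m $ k * (V m $ i $ j * V k $ i $ j))"
    by (rule sum.cong[OF refl], rule sum.swap)
  also have "\<dots> = (\<Sum>m\<in>UNIV. \<Sum>i\<in>UNIV. \<Sum>j\<in>UNIV. \<Sum>k\<in>UNIV. R $ m $ k * (V m $ i $ j * V k $ i $ j))"
    by (rule sum.swap)
  also have "\<dots> = (\<Sum>m\<in>UNIV. \<Sum>i\<in>UNIV. \<Sum>k\<in>UNIV. \<Sum>j\<in>UNIV. R $ m $ k * (V m $ i $ j * V k $ i $ j))"
    by (intro sum.cong refl sum.swap)
  also have "\<dots> = (\<Sum>m\<in>UNIV. \<Sum>k\<in>UNIV. \<Sum>i\<in>UNIV. \<Sum>j\<in>UNIV. R $ m $ k * (V m $ i $ j * V k $ i $ j))"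
    by (intro sum.cong refl sum.swap)
  also have "\<dots> = (\<Sum>m\<in>UNIV. \<Sum>k\<in>UNIV. R $ m $ k * (\<Sum>i\<in>UNIV. \<Sum>j\<in>UNIV. V m $ i $ j * V k $ i $ j))"
    by (simp add: sum_distrib_left)
  finally show ?thesis .
qed
lemma rep: "(\<Sum>m\<in>UNIV. (V::'m::finite\<Rightarrow>real^'n^'n) m $ i $ j * (\<Sum>k\<in>UNIV. R $ m $ k * (Y $ k - ybar $ k)))
  = (\<Sum>l\<in>UNIV. Y $ l * (\<Sum>m\<in>UNIV. R $ m $ l * V m $ i $ j)) - (\<Sum>m\<in>UNIV. (\<Sum>k\<in>UNIV. R $ m $ k * ybar $ k) * V m $ i $ j)"
proof -
  have "(\<Sum>m\<in>UNIV. V m $ i $ j * (\<Sum>k\<in>UNIV. R $ m $ k * (Y $ k - ybar $ k)))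
     = (\<Sum>m\<in>UNIV. \<Sum>k\<in>UNIV. Y $ k * (R $ m $ k * V m $ i $ j)) - (\<Sum>m\<in>UNIV. (\<Sum>k\<in>UNIV. R $ m $ k * ybar $ k) * V m $ i $ j)"
    by (simp add: sum_distrib_left sum_distrib_right right_diff_distrib sum_subtractf mult_ac)
  also have "(\<Sum>m\<in>UNIV. \<Sum>k\<in>UNIV. Y $ k * (R $ m $ k * V m $ i $ j)) = (\<Sum>k\<in>UNIV. \<Sum>m\<in>UNIV. Y $ k * (R $ m $ k * V m $ i $ j))"
    by (rule sum.swap)
  finally show ?thesis by (simp add: sum_distrib_left)
qed

context prob_space begin

lemma exp_lin1:
  assumes "L2 Z0" "finite I" "\<And>m. m \<in> I \<Longrightarrow> L2 (Z m)"
  shows "expectation (\<lambda>\<omega>. Z0 \<omega> + (\<Sum>m\<in>I. a m * Z m \<omega>))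
     = expectation Z0 + (\<Sum>m\<in>I. a m * expectation (Z m))"
  using exp_lin[OF L2_const[of 1] assms, where a=a] by simp

lemma exp_diffc:
  assumes "L2 X" "L2 Z"
  shows "expectation (\<lambda>\<omega>. X \<omega> * (Z \<omega> - c)) = expectation (\<lambda>\<omega>. X \<omega> * Z \<omega>) - c * expectation X"
proof -
  have "(\<lambda>\<omega>. X \<omega> * (Z \<omega> - c)) = (\<lambda>\<omega>. X \<omega> * Z \<omega> - c * X \<omega>)" by (simp add: algebra_simps)
  moreover have "integrable M (\<lambda>\<omega>. X \<omega> * Z \<omega>)" by (rule L2_mult[OF assms])
  moreover have "integrable M (\<lambda>\<omega>. c * X \<omega>)" using L2_integrable[OF assms(1)] by simp
  ultimately show ?thesis by simp
qed

lemma exp_lin2: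
  assumes "L2 G" "L2 X" "L2 Z"
  shows "expectation (\<lambda>\<omega>. G \<omega> * (a * X \<omega> - b * Z \<omega>)) =
     a * expectation (\<lambda>\<omega>. G \<omega> * X \<omega>) - b * expectation (\<lambda>\<omega>. G \<omega> * Z \<omega>)"
proof -
  have "(\<lambda>\<omega>. G \<omega> * (a * X \<omega> - b * Z \<omega>)) = (\<lambda>\<omega>. a * (G \<omega> * X \<omega>) - b * (G \<omega> * Z \<omega>))"
    by (simp add: fun_eq_iff algebra_simps)
  moreover have "integrable M (\<lambda>\<omega>. a * (G \<omega> * X \<omega>))" using L2_mult[OF assms(1,2)] by simp
  moreover have "integrable M (\<lambda>\<omega>. b * (G \<omega> * Z \<omega>))" using L2_mult[OF assms(1,3)] by simp
  ultimately show ?thesis by simp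
qed

lemma exp_sum2:
  assumes "\<And>i j. integrable M (X i j)"
  shows "expectation (\<lambda>\<omega>. \<Sum>i\<in>I. \<Sum>j\<in>J. X i j \<omega>) = (\<Sum>i\<in>I. \<Sum>j\<in>J. expectation (X i j))"
proof -
  have "\<And>i. integrable M (\<lambda>\<omega>. \<Sum>j\<in>J. X i j \<omega>)"
    using assms by (intro Bochner_Integration.integrable_sum) 
  then have "expectation (\<lambda>\<omega>. \<Sum>i\<in>I. \<Sum>j\<in>J. X i j \<omega>) = (\<Sum>i\<in>I. expectation (\<lambda>\<omega>. \<Sum>j\<in>J. X i j \<omega>))"
    by (intro Bochner_Integration.integral_sum)
  also have "\<dots> = (\<Sum>i\<in>I. \<Sum>j\<in>J. expectation (X i j))"
    using assms by (intro sum.cong refl Bochner_Integration.integral_sum)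
  finally show ?thesis .
qed

end

context prob_space begin

lemma lmmse:
  fixes Y :: "'a \<Rightarrow> real^'m" and F :: "'a \<Rightarrow> real^'n^'n" and ybar :: "real^'m"
    and T :: "real^'m^'m" and F0 :: "real^'n^'n" and V :: "'m \<Rightarrow> real^'n^'n"
    and D :: "'a \<Rightarrow> real^'n^'n"
  assumes L2Y: "\<And>m. L2 (\<lambda>\<omega>. Y \<omega> $ m)"
  and L2F: "\<And>i j. L2 (\<lambda>\<omega>. F \<omega> $ i $ j)"
  and EY: "\<And>m. expectation (\<lambda>\<omega>. Y \<omega> $ m) = ybar $ m"
  and EF: "\<And>i j. expectation (\<lambda>\<omega>. F \<omega> $ i $ j) = F0 $ i $ j"
  and EYY: "\<And>m k. expectation (\<lambda>\<omega>. Y \<omega> $ m * Y \<omega> $ k) = T $ m $ k + ybar $ m * ybar $ k"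
  and EFY: "\<And>i j m. expectation (\<lambda>\<omega>. F \<omega> $ i $ j * Y \<omega> $ m) = F0 $ i $ j * ybar $ m + V m $ i $ j"
  and Tinv: "invertible T"
  and Ddef: "D = (\<lambda>\<omega>. F0 + (\<Sum>m\<in>UNIV. (matrix_inv T *v (Y \<omega> - ybar)) $ m *\<^sub>R V m))"
  shows "(\<exists>W0 W. \<forall>\<omega>. D \<omega> = W0 + (\<Sum>m\<in>UNIV. Y \<omega> $ m *\<^sub>R W m))
      \<and> (\<forall>W0 W. expectation (\<lambda>\<omega>. frob_sq (D \<omega> - F \<omega>))
                 \<le> expectation (\<lambda>\<omega>. frob_sq ((W0 + (\<Sum>m\<in>UNIV. Y \<omega> $ m *\<^sub>R W m)) - F \<omega>))
          \<and> (expectation (\<lambda>\<omega>. frob_sq ((W0 + (\<Sum>m\<in>UNIV. Y \<omega> $ m *\<^sub>R W m)) - F \<omega>))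
               = expectation (\<lambda>\<omega>. frob_sq (D \<omega> - F \<omega>))
             \<longrightarrow> (AE \<omega> in M. W0 + (\<Sum>m\<in>UNIV. Y \<omega> $ m *\<^sub>R W m) = D \<omega>)))
      \<and> expectation (\<lambda>\<omega>. frob_sq (D \<omega> - F \<omega>)) = expectation (\<lambda>\<omega>. frob_sq (F \<omega> - F0))
           - (\<Sum>m\<in>UNIV. \<Sum>m'\<in>UNIV. matrix_inv T $ m $ m' * trace (transpose (V m) ** V m'))"
proof -
  define R where "R = matrix_inv T"
  have RT: "\<And>m l. (\<Sum>k\<in>UNIV. R $ m $ k * T $ k $ l) = (if m = l then 1 else 0)"
    unfolding R_def by (rule inv_comp[OF Tinv])
  have Tsym: "\<And>m k. T $ m $ k = T $ k $ m"
  proof -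
    fix m k
    have "expectation (\<lambda>\<omega>. Y \<omega> $ m * Y \<omega> $ k) = expectation (\<lambda>\<omega>. Y \<omega> $ k * Y \<omega> $ m)"
      by (simp add: mult.commute)
    then show "T $ m $ k = T $ k $ m" using EYY[of m k] EYY[of k m] by (simp add: mult.commute)
  qed
  define t where "t = (\<lambda>m \<omega>. (\<Sum>k\<in>UNIV. R $ m $ k * (Y \<omega> $ k - ybar $ k)))"
  have tD: "\<And>\<omega> m. (R *v (Y \<omega> - ybar)) $ m = t m \<omega>"
    by (simp add: matrix_vector_mult_def t_def)
  have Dc: "\<And>\<omega> i j. D \<omega> $ i $ j = F0 $ i $ j + (\<Sum>m\<in>UNIV. V m $ i $ j * t m \<omega>)"
    by (simp add: Ddef tD[unfolded R_def] mult.commute)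
  have L2Yc: "\<And>k. L2 (\<lambda>\<omega>. Y \<omega> $ k - ybar $ k)"
    by (rule L2_diff[OF L2Y L2_const])
  have L2t: "\<And>m. L2 (t m)"
    unfolding t_def by (intro L2_sum L2_cmult L2Yc) simp
  have Ec: "\<And>k. expectation (\<lambda>\<omega>. Y \<omega> $ k - ybar $ k) = 0"
    using exp_diffc[OF L2_const[of 1] L2Y] EY by (simp add: prob_space)
  have Et: "\<And>m. expectation (t m) = 0"
  proof -
    fix m
    have "expectation (t m) = expectation (\<lambda>\<omega>. (\<lambda>_. 0) \<omega> + (\<Sum>k\<in>UNIV. R $ m $ k * (Y \<omega> $ k - ybar $ k)))"
      by (simp add: t_def)
    also have "\<dots> = 0"
      by (subst exp_lin1) (auto intro: L2Yc simp: Ec)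
    finally show "expectation (t m) = 0" .
  qed
  have EtY: "\<And>m l. expectation (\<lambda>\<omega>. Y \<omega> $ l * t m \<omega>) = (if m = l then 1 else 0)"
  proof -
    fix m l
    have "expectation (\<lambda>\<omega>. Y \<omega> $ l * t m \<omega>) =
       expectation (\<lambda>\<omega>. Y \<omega> $ l * ((\<lambda>_. 0) \<omega> + (\<Sum>k\<in>UNIV. R $ m $ k * (Y \<omega> $ k - ybar $ k))))"
      by (simp add: t_def)
    also have "\<dots> = (\<Sum>k\<in>UNIV. R $ m $ k * expectation (\<lambda>\<omega>. Y \<omega> $ l * (Y \<omega> $ k - ybar $ k)))"
      by (subst exp_lin) (auto intro: L2Yc L2Y)
    also have "\<dots> = (\<Sum>k\<in>UNIV. R $ m $ k * T $ k $ l)"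
      by (intro sum.cong refl) (simp add: exp_diffc[OF L2Y L2Y] EYY EY Tsym)
    finally show "expectation (\<lambda>\<omega>. Y \<omega> $ l * t m \<omega>) = (if m = l then 1 else 0)"
      using RT by simp
  qed
  have EtF: "\<And>m i j. expectation (\<lambda>\<omega>. F \<omega> $ i $ j * t m \<omega>) = (\<Sum>k\<in>UNIV. R $ m $ k * V k $ i $ j)"
  proof -
    fix m i j
    have "expectation (\<lambda>\<omega>. F \<omega> $ i $ j * t m \<omega>) =
       expectation (\<lambda>\<omega>. F \<omega> $ i $ j * ((\<lambda>_. 0) \<omega> + (\<Sum>k\<in>UNIV. R $ m $ k * (Y \<omega> $ k - ybar $ k))))"
      by (simp add: t_def)
    also have "\<dots> = (\<Sum>k\<in>UNIV. R $ m $ k * expectation (\<lambda>\<omega>. F \<omega> $ i $ j * (Y \<omega> $ k - ybar $ k)))"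
      by (subst exp_lin) (auto intro: L2Yc L2F)
    also have "\<dots> = (\<Sum>k\<in>UNIV. R $ m $ k * V k $ i $ j)"
      by (intro sum.cong refl) (simp add: exp_diffc[OF L2F L2Y] EFY EF)
    finally show "expectation (\<lambda>\<omega>. F \<omega> $ i $ j * t m \<omega>) = (\<Sum>k\<in>UNIV. R $ m $ k * V k $ i $ j)" .
  qed
  define G where "G i j \<omega> = D \<omega> $ i $ j - F \<omega> $ i $ j" for i j \<omega>
  have Gform: "\<And>i j \<omega>. G i j \<omega> = (F0 $ i $ j - F \<omega> $ i $ j) + (\<Sum>m\<in>UNIV. V m $ i $ j * t m \<omega>)"
    by (simp add: G_def Dc)
  have Gfun: "\<And>i j. G i j = (\<lambda>\<omega>. (F0 $ i $ j - F \<omega> $ i $ j) + (\<Sum>m\<in>UNIV. V m $ i $ j * t m \<omega>))"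
    by (simp add: fun_eq_iff Gform)
  have L2F0: "\<And>i j. L2 (\<lambda>\<omega>. F0 $ i $ j - F \<omega> $ i $ j)"
    by (rule L2_diff[OF L2_const L2F])
  have EF0: "\<And>i j. expectation (\<lambda>\<omega>. F0 $ i $ j - F \<omega> $ i $ j) = 0"
    by (subst Bochner_Integration.integral_diff) (auto simp: L2_integrable[OF L2F] EF prob_space)
  have L2G: "\<And>i j. L2 (G i j)"
    unfolding Gfun by (intro L2_add L2F0 L2_sum L2_cmult L2t) simp
  have EG: "\<And>i j. expectation (G i j) = 0"
  proof -
    fix i j
    have "expectation (G i j) = expectation (\<lambda>\<omega>. (F0 $ i $ j - F \<omega> $ i $ j) + (\<Sum>m\<in>UNIV. V m $ i $ j * t m \<omega>))"
      by (simp add: Gfun)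
    also have "\<dots> = 0"
      by (subst exp_lin1) (auto intro: L2F0 L2t simp: Et EF0)
    finally show "expectation (G i j) = 0" .
  qed
  have EGY: "\<And>i j l. expectation (\<lambda>\<omega>. G i j \<omega> * Y \<omega> $ l) = 0"
  proof -
    fix i j l
    have "expectation (\<lambda>\<omega>. G i j \<omega> * Y \<omega> $ l) = expectation (\<lambda>\<omega>. Y \<omega> $ l * ((F0 $ i $ j - F \<omega> $ i $ j) + (\<Sum>m\<in>UNIV. V m $ i $ j * t m \<omega>)))"
      by (simp add: Gform mult.commute)
    also have "\<dots> = expectation (\<lambda>\<omega>. Y \<omega> $ l * (F0 $ i $ j - F \<omega> $ i $ j)) + (\<Sum>m\<in>UNIV. V m $ i $ j * (if m = l then 1 else 0))"
      by (subst exp_lin) (auto intro: L2F0 L2t L2Y simp: EtY)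
    also have "expectation (\<lambda>\<omega>. Y \<omega> $ l * (F0 $ i $ j - F \<omega> $ i $ j)) = - V l $ i $ j"
    proof -
      have "expectation (\<lambda>\<omega>. Y \<omega> $ l * (F0 $ i $ j - F \<omega> $ i $ j)) = 
            - expectation (\<lambda>\<omega>. Y \<omega> $ l * (F \<omega> $ i $ j - F0 $ i $ j))"
      proof -
        have "(\<lambda>\<omega>. Y \<omega> $ l * (F0 $ i $ j - F \<omega> $ i $ j)) = (\<lambda>\<omega>. - (Y \<omega> $ l * (F \<omega> $ i $ j - F0 $ i $ j)))"
          by (simp add: fun_eq_iff algebra_simps)
        then show ?thesis by (simp only: Bochner_Integration.integral_minus)
      qed
      also have "\<dots> = - V l $ i $ j"
      proof -
        have c1: "expectation (\<lambda>\<omega>. Y \<omega> $ l * F \<omega> $ i $ j) = F0 $ i $ j * ybar $ l + V l $ i $ j"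
          using EFY[of i j l] by (simp add: mult.commute)
        show ?thesis by (simp add: exp_diffc[OF L2Y L2F] EY c1)
      qed
      finally show ?thesis .
    qed
    finally show "expectation (\<lambda>\<omega>. G i j \<omega> * Y \<omega> $ l) = 0"
      by (simp add: if_distrib cong: if_cong)
  qed
  have EGt: "\<And>i j m. expectation (\<lambda>\<omega>. G i j \<omega> * t m \<omega>) = 0"
  proof -
    fix i j m
    have "expectation (\<lambda>\<omega>. G i j \<omega> * t m \<omega>) =
       expectation (\<lambda>\<omega>. G i j \<omega> * ((\<lambda>_. 0) \<omega> + (\<Sum>k\<in>UNIV. R $ m $ k * (Y \<omega> $ k - ybar $ k))))"
      by (simp add: t_def)
    also have "\<dots> = (\<Sum>k\<in>UNIV. R $ m $ k * expectation (\<lambda>\<omega>. G i j \<omega> * (Y \<omega> $ k - ybar $ k)))"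
      by (subst exp_lin) (auto intro: L2Yc L2G)
    also have "\<dots> = 0"
      by (intro sum.neutral ballI) (simp add: exp_diffc[OF L2G L2Y] EGY EG)
    finally show "expectation (\<lambda>\<omega>. G i j \<omega> * t m \<omega>) = 0" .
  qed
  have L2Dc: "\<And>i j. L2 (\<lambda>\<omega>. D \<omega> $ i $ j)"
  proof -
    fix i j
    have "(\<lambda>\<omega>. D \<omega> $ i $ j) = (\<lambda>\<omega>. G i j \<omega> + F \<omega> $ i $ j)" by (simp add: G_def)
    then show "L2 (\<lambda>\<omega>. D \<omega> $ i $ j)" using L2_add[OF L2G L2F] by simp
  qed
  define W0 where "W0 = F0 - (\<Sum>m\<in>UNIV. (\<Sum>k\<in>UNIV. R $ m $ k * ybar $ k) *\<^sub>R V m)"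
  define W where "W l = (\<Sum>m\<in>UNIV. R $ m $ l *\<^sub>R V m)" for l
  have repr: "\<forall>\<omega>. D \<omega> = W0 + (\<Sum>l\<in>UNIV. Y \<omega> $ l *\<^sub>R W l)"
  proof
    fix \<omega>
    show "D \<omega> = W0 + (\<Sum>l\<in>UNIV. Y \<omega> $ l *\<^sub>R W l)"
    proof (simp add: vec_eq_iff, intro allI)
      fix i j
      show "D \<omega> $ i $ j = W0 $ i $ j + (\<Sum>l\<in>UNIV. Y \<omega> $ l * W l $ i $ j)"
        unfolding Dc W0_def W_def t_def using rep[of V i j R "Y \<omega>" ybar]
        by (simp add: mult.commute)
    qed
  qed
  have mseD: "expectation (\<lambda>\<omega>. frob_sq (D \<omega> - F \<omega>)) = (\<Sum>i\<in>UNIV. \<Sum>j\<in>UNIV. expectation (\<lambda>\<omega>. (G i j \<omega>)^2))"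
    unfolding frob_sq_def G_def[symmetric]
    by (simp add: G_def) (rule exp_sum2, use L2G in \<open>simp add: L2_def G_def\<close>)
  have main: "expectation (\<lambda>\<omega>. frob_sq (D \<omega> - F \<omega>))
                 \<le> expectation (\<lambda>\<omega>. frob_sq ((W0' + (\<Sum>m\<in>UNIV. Y \<omega> $ m *\<^sub>R W' m)) - F \<omega>))
          \<and> (expectation (\<lambda>\<omega>. frob_sq ((W0' + (\<Sum>m\<in>UNIV. Y \<omega> $ m *\<^sub>R W' m)) - F \<omega>))
               = expectation (\<lambda>\<omega>. frob_sq (D \<omega> - F \<omega>))
             \<longrightarrow> (AE \<omega> in M. W0' + (\<Sum>m\<in>UNIV. Y \<omega> $ m *\<^sub>R W' m) = D \<omega>))" for W0' W'
  proof -
    define f where "f \<omega> = W0' + (\<Sum>m\<in>UNIV. Y \<omega> $ m *\<^sub>R W' m)" for \<omega>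
    define H where "H i j \<omega> = f \<omega> $ i $ j - D \<omega> $ i $ j" for i j \<omega>
    have fc: "\<And>\<omega> i j. f \<omega> $ i $ j = W0' $ i $ j + (\<Sum>m\<in>UNIV. W' m $ i $ j * Y \<omega> $ m)"
      by (simp add: f_def mult.commute)
    have Hfun: "\<And>i j. H i j = (\<lambda>\<omega>. (W0' $ i $ j - F0 $ i $ j) + (\<Sum>m\<in>UNIV. 1 * (W' m $ i $ j * Y \<omega> $ m - V m $ i $ j * t m \<omega>)))"
      by (simp add: fun_eq_iff H_def fc Dc sum_subtractf)
    have L2H: "\<And>i j. L2 (H i j)"
      unfolding Hfun by (intro L2_add L2_sum L2_cmult L2_diff L2Y L2t) simp_all
    have L2Zm: "\<And>i j m. L2 (\<lambda>\<omega>. W' m $ i $ j * Y \<omega> $ m - V m $ i $ j * t m \<omega>)"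
      by (intro L2_diff L2_cmult L2Y L2t)
    have EGH: "\<And>i j. expectation (\<lambda>\<omega>. G i j \<omega> * H i j \<omega>) = 0"
    proof -
      fix i j
      have "expectation (\<lambda>\<omega>. G i j \<omega> * H i j \<omega>) =
         expectation (\<lambda>\<omega>. G i j \<omega> * (W0' $ i $ j - F0 $ i $ j)) + 
           (\<Sum>m\<in>UNIV. 1 * expectation (\<lambda>\<omega>. G i j \<omega> * (W' m $ i $ j * Y \<omega> $ m - V m $ i $ j * t m \<omega>)))"
        unfolding Hfun by (rule exp_lin) (auto intro: L2G L2Zm)
      also have "\<dots> = 0"
        using EG by (simp add: exp_lin2[OF L2G L2Y L2t] EGY EGt)
      finally show "expectation (\<lambda>\<omega>. G i j \<omega> * H i j \<omega>) = 0" .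
    qed
    have pt: "\<And>\<omega>. frob_sq (f \<omega> - F \<omega>) = (\<Sum>i\<in>UNIV. \<Sum>j\<in>UNIV. (H i j \<omega>)^2 + ((G i j \<omega>)^2 + 2 * (G i j \<omega> * H i j \<omega>)))"
      unfolding frob_sq_def by (intro sum.cong refl) (simp add: H_def G_def power2_eq_square algebra_simps)
    have intHH: "\<And>i j. integrable M (\<lambda>\<omega>. (H i j \<omega>)^2)" using L2H by (simp add: L2_def)
    have intGG: "\<And>i j. integrable M (\<lambda>\<omega>. (G i j \<omega>)^2)" using L2G by (simp add: L2_def)
    have intGH: "\<And>i j. integrable M (\<lambda>\<omega>. G i j \<omega> * H i j \<omega>)" using L2_mult[OF L2G L2H] by simp
    have msef: "expectation (\<lambda>\<omega>. frob_sq (f \<omega> - F \<omega>)) =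
       (\<Sum>i\<in>UNIV. \<Sum>j\<in>UNIV. expectation (\<lambda>\<omega>. (H i j \<omega>)^2)) + expectation (\<lambda>\<omega>. frob_sq (D \<omega> - F \<omega>))"
    proof -
      have "expectation (\<lambda>\<omega>. frob_sq (f \<omega> - F \<omega>)) =
         (\<Sum>i\<in>UNIV. \<Sum>j\<in>UNIV. expectation (\<lambda>\<omega>. (H i j \<omega>)^2 + ((G i j \<omega>)^2 + 2 * (G i j \<omega> * H i j \<omega>))))"
        unfolding pt by (rule exp_sum2) (use intHH intGG intGH in simp)
      also have "\<dots> = (\<Sum>i\<in>UNIV. \<Sum>j\<in>UNIV. expectation (\<lambda>\<omega>. (H i j \<omega>)^2) + expectation (\<lambda>\<omega>. (G i j \<omega>)^2))"
        using intHH intGG intGH EGH by simp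
      finally show ?thesis by (simp add: mseD sum.distrib)
    qed
    have HH: "expectation (\<lambda>\<omega>. frob_sq (f \<omega> - D \<omega>)) = (\<Sum>i\<in>UNIV. \<Sum>j\<in>UNIV. expectation (\<lambda>\<omega>. (H i j \<omega>)^2))"
      unfolding frob_sq_def by (simp add: H_def[symmetric]) (rule exp_sum2, use intHH in \<open>simp add: H_def\<close>)
    have intfD: "integrable M (\<lambda>\<omega>. frob_sq (f \<omega> - D \<omega>))"
      unfolding frob_sq_def using intHH by (simp add: H_def)
    have nn: "0 \<le> expectation (\<lambda>\<omega>. frob_sq (f \<omega> - D \<omega>))"
      by (intro Bochner_Integration.integral_nonneg frob_sq_nonneg)
    show ?thesis
    proof
      show "expectation (\<lambda>\<omega>. frob_sq (D \<omega> - F \<omega>)) \<le> expectation (\<lambda>\<omega>. frob_sq (W0' + (\<Sum>m\<in>UNIV. Y \<omega> $ m *\<^sub>R W' m) - F \<omega>))"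
        using msef HH nn by (simp add: f_def)
      show "expectation (\<lambda>\<omega>. frob_sq (W0' + (\<Sum>m\<in>UNIV. Y \<omega> $ m *\<^sub>R W' m) - F \<omega>)) = expectation (\<lambda>\<omega>. frob_sq (D \<omega> - F \<omega>)) \<longrightarrow>
          (AE \<omega> in M. W0' + (\<Sum>m\<in>UNIV. Y \<omega> $ m *\<^sub>R W' m) = D \<omega>)"
      proof
        assume "expectation (\<lambda>\<omega>. frob_sq (W0' + (\<Sum>m\<in>UNIV. Y \<omega> $ m *\<^sub>R W' m) - F \<omega>)) = expectation (\<lambda>\<omega>. frob_sq (D \<omega> - F \<omega>))"
        then have "expectation (\<lambda>\<omega>. frob_sq (f \<omega> - D \<omega>)) = 0"
          using msef HH by (simp add: f_def)
        then have "AE \<omega> in M. frob_sq (f \<omega> - D \<omega>) = 0"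
          using intfD by (subst (asm) integral_nonneg_eq_0_iff_AE) (auto simp: frob_sq_nonneg)
        then show "AE \<omega> in M. W0' + (\<Sum>m\<in>UNIV. Y \<omega> $ m *\<^sub>R W' m) = D \<omega>"
          by (rule AE_mp) (auto simp: f_def dest!: frob_sq_eq_0)
      qed
    qed
  qed
  have EF0t: "\<And>i j m. expectation (\<lambda>\<omega>. (F0 $ i $ j - F \<omega> $ i $ j) * t m \<omega>) = - (\<Sum>k\<in>UNIV. R $ m $ k * V k $ i $ j)"
  proof -
    fix i j m
    have "(\<lambda>\<omega>. (F0 $ i $ j - F \<omega> $ i $ j) * t m \<omega>) = (\<lambda>\<omega>. - (t m \<omega> * (F \<omega> $ i $ j - F0 $ i $ j)))"
      by (simp add: fun_eq_iff algebra_simps)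
    then have "expectation (\<lambda>\<omega>. (F0 $ i $ j - F \<omega> $ i $ j) * t m \<omega>) = - expectation (\<lambda>\<omega>. t m \<omega> * (F \<omega> $ i $ j - F0 $ i $ j))"
      by (simp only: Bochner_Integration.integral_minus)
    also have "\<dots> = - (\<Sum>k\<in>UNIV. R $ m $ k * V k $ i $ j)"
      using EtF[of i j m] by (simp add: exp_diffc[OF L2t L2F] Et mult.commute)
    finally show "expectation (\<lambda>\<omega>. (F0 $ i $ j - F \<omega> $ i $ j) * t m \<omega>) = - (\<Sum>k\<in>UNIV. R $ m $ k * V k $ i $ j)" .
  qed
  have EGG: "\<And>i j. expectation (\<lambda>\<omega>. (G i j \<omega>)^2) = expectation (\<lambda>\<omega>. (F \<omega> $ i $ j - F0 $ i $ j)^2)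
        - (\<Sum>m\<in>UNIV. V m $ i $ j * (\<Sum>k\<in>UNIV. R $ m $ k * V k $ i $ j))"
  proof -
    fix i j
    have "expectation (\<lambda>\<omega>. (G i j \<omega>)^2) = expectation (\<lambda>\<omega>. G i j \<omega> * ((F0 $ i $ j - F \<omega> $ i $ j) + (\<Sum>m\<in>UNIV. V m $ i $ j * t m \<omega>)))"
      by (simp add: power2_eq_square Gform[symmetric])
    also have "\<dots> = expectation (\<lambda>\<omega>. G i j \<omega> * (F0 $ i $ j - F \<omega> $ i $ j))"
      by (subst exp_lin) (auto intro: L2G L2F0 L2t simp: EGt)
    also have "\<dots> = expectation (\<lambda>\<omega>. (F0 $ i $ j - F \<omega> $ i $ j) * ((F0 $ i $ j - F \<omega> $ i $ j) + (\<Sum>m\<in>UNIV. V m $ i $ j * t m \<omega>)))"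
      by (simp add: Gform mult.commute)
    also have "\<dots> = expectation (\<lambda>\<omega>. (F0 $ i $ j - F \<omega> $ i $ j) * (F0 $ i $ j - F \<omega> $ i $ j))
          + (\<Sum>m\<in>UNIV. V m $ i $ j * expectation (\<lambda>\<omega>. (F0 $ i $ j - F \<omega> $ i $ j) * t m \<omega>))"
      by (subst exp_lin) (auto intro: L2F0 L2t)
    also have "expectation (\<lambda>\<omega>. (F0 $ i $ j - F \<omega> $ i $ j) * (F0 $ i $ j - F \<omega> $ i $ j)) = expectation (\<lambda>\<omega>. (F \<omega> $ i $ j - F0 $ i $ j)^2)"
      by (simp add: power2_eq_square algebra_simps)
    finally show "expectation (\<lambda>\<omega>. (G i j \<omega>)^2) = expectation (\<lambda>\<omega>. (F \<omega> $ i $ j - F0 $ i $ j)^2)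
        - (\<Sum>m\<in>UNIV. V m $ i $ j * (\<Sum>k\<in>UNIV. R $ m $ k * V k $ i $ j))"
      by (simp add: EF0t sum_negf)
  qed
  have formula: "expectation (\<lambda>\<omega>. frob_sq (D \<omega> - F \<omega>)) = expectation (\<lambda>\<omega>. frob_sq (F \<omega> - F0))
           - (\<Sum>m\<in>UNIV. \<Sum>m'\<in>UNIV. matrix_inv T $ m $ m' * trace (transpose (V m) ** V m'))"
  proof -
    have intFF: "\<And>i j. integrable M (\<lambda>\<omega>. (F \<omega> $ i $ j - F0 $ i $ j)^2)"
      using L2_diff[OF L2F L2_const] by (simp add: L2_def)
    have "expectation (\<lambda>\<omega>. frob_sq (F \<omega> - F0)) = (\<Sum>i\<in>UNIV. \<Sum>j\<in>UNIV. expectation (\<lambda>\<omega>. (F \<omega> $ i $ j - F0 $ i $ j)^2))"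
      unfolding frob_sq_def by simp (rule exp_sum2, rule intFF)
    then show ?thesis
      unfolding mseD EGG R_def[symmetric] tr sw[symmetric]
      by (simp add: sum_subtractf)
  qed
  show ?thesis using repr main formula by blast
qed

end

context prob_space begin

lemma gauss_mom:
  assumes g: "real_gaussian M Y mu v"
  shows "Y \<in> borel_measurable M" "0 \<le> v"
    "\<And>k. integrable M (\<lambda>\<omega>. (Y \<omega> - mu)^k)"
    "expectation (\<lambda>\<omega>. Y \<omega> - mu) = 0"
    "expectation (\<lambda>\<omega>. (Y \<omega> - mu)^2) = v"
    "expectation (\<lambda>\<omega>. (Y \<omega> - mu)^3) = 0"
    "expectation (\<lambda>\<omega>. (Y \<omega> - mu)^4) = 3 * v^2"
proof -
  have meas: "Y \<in> borel_measurable M" using g by (simp add: real_gaussian_def)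
  then show "Y \<in> borel_measurable M" .
  have cases: "(v = 0 \<and> (AE \<omega> in M. Y \<omega> = mu)) \<or> (v > 0 \<and> distributed M lborel Y (normal_density mu (sqrt v)))"
    using g by (simp add: real_gaussian_def)
  then show "0 \<le> v" by auto
  have all: "(\<forall>k. integrable M (\<lambda>\<omega>. (Y \<omega> - mu)^k)) \<and>
    expectation (\<lambda>\<omega>. Y \<omega> - mu) = 0 \<and>
    expectation (\<lambda>\<omega>. (Y \<omega> - mu)^2) = v \<and>
    expectation (\<lambda>\<omega>. (Y \<omega> - mu)^3) = 0 \<and>
    expectation (\<lambda>\<omega>. (Y \<omega> - mu)^4) = 3 * v^2"
    using cases
  proof
    assume h: "v = 0 \<and> (AE \<omega> in M. Y \<omega> = mu)"
    have ae: "\<And>k. AE \<omega> in M. (Y \<omega> - mu)^k = (0::real)^k"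
      using h by (auto elim!: AE_mp)
    have int: "\<And>k. integrable M (\<lambda>\<omega>. (Y \<omega> - mu)^k)"
    proof -
      fix k
      have "integrable M (\<lambda>\<omega>. (0::real)^k)" by simp
      then show "integrable M (\<lambda>\<omega>. (Y \<omega> - mu)^k)"
        using integrable_cong_AE[of "\<lambda>\<omega>. (Y \<omega> - mu)^k" M "\<lambda>\<omega>. (0::real)^k"] ae[of k] meas by simp
    qed
    have ex: "\<And>k. expectation (\<lambda>\<omega>. (Y \<omega> - mu)^k) = (0::real)^k"
    proof -
      fix k
      have "expectation (\<lambda>\<omega>. (Y \<omega> - mu)^k) = expectation (\<lambda>\<omega>. (0::real)^k)"
        by (rule integral_cong_AE) (use meas ae[of k] in simp_all)
      then show "expectation (\<lambda>\<omega>. (Y \<omega> - mu)^k) = (0::real)^k" by (simp add: prob_space)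
    qed
    show ?thesis using int ex[of 1] ex[of 2] ex[of 3] ex[of 4] h by simp
  next
    assume h: "v > 0 \<and> distributed M lborel Y (normal_density mu (sqrt v))"
    then have s: "0 < sqrt v" and D: "distributed M lborel Y (normal_density mu (sqrt v))" by auto
    have int: "\<And>k. integrable M (\<lambda>\<omega>. (Y \<omega> - mu)^k)"
      using distributed_integrable[OF D, of "\<lambda>x. (x - mu)^k" for k] integrable_normal_moment[OF s]
      by simp
    have ex: "\<And>k. expectation (\<lambda>\<omega>. (Y \<omega> - mu)^k) = (\<integral>x. normal_density mu (sqrt v) x * (x - mu)^k \<partial>lborel)"
      using distributed_integral[OF D, of "\<lambda>x. (x - mu)^k" for k] by simp
    have e1: "expectation (\<lambda>\<omega>. (Y \<omega> - mu)^1) = 0"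
      using ex[of 1] integral_normal_moment_odd[OF s, where k=0 and \<mu>=mu] by simp
    have e3: "expectation (\<lambda>\<omega>. (Y \<omega> - mu)^3) = 0"
      using ex[of 3] integral_normal_moment_odd[OF s, where k=1 and \<mu>=mu] by (simp add: numeral_eq_Suc)
    have e2: "expectation (\<lambda>\<omega>. (Y \<omega> - mu)^2) = v"
      using ex[of 2] integral_normal_moment_even[OF s, where k=1 and \<mu>=mu] h by simp
    have e4: "expectation (\<lambda>\<omega>. (Y \<omega> - mu)^4) = 3 * v^2"
      using ex[of 4] integral_normal_moment_even[OF s, where k=2 and \<mu>=mu] h
      by (simp add: fact_numeral power2_eq_square field_simps)
    show ?thesis using int e1 e2 e3 e4 by simp
  qed
  then show "\<And>k. integrable M (\<lambda>\<omega>. (Y \<omega> - mu)^k)"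
    "expectation (\<lambda>\<omega>. Y \<omega> - mu) = 0"
    "expectation (\<lambda>\<omega>. (Y \<omega> - mu)^2) = v"
    "expectation (\<lambda>\<omega>. (Y \<omega> - mu)^3) = 0"
    "expectation (\<lambda>\<omega>. (Y \<omega> - mu)^4) = 3 * v^2" by auto
qed

end

context prob_space begin

lemma indep3_prod:
  fixes x :: "'a \<Rightarrow> 'b::topological_space" and ez :: "'a \<Rightarrow> 'c::topological_space"
    and ey :: "'a \<Rightarrow> 'd::topological_space"
    and f :: "'b \<Rightarrow> real" and g :: "'c \<Rightarrow> real" and h :: "'d \<Rightarrow> real"
  assumes ind: "indep3 M x ez ey"
    and mx: "x \<in> borel_measurable M" and mz: "ez \<in> borel_measurable M" and my: "ey \<in> borel_measurable M"
    and mf: "f \<in> borel_measurable borel" and mg: "g \<in> borel_measurable borel" and mh: "h \<in> borel_measurable borel"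
    and if_: "integrable M (\<lambda>\<omega>. f (x \<omega>))" and ig: "integrable M (\<lambda>\<omega>. g (ez \<omega>))"
    and ih: "integrable M (\<lambda>\<omega>. h (ey \<omega>))"
  shows "integrable M (\<lambda>\<omega>. f (x \<omega>) * g (ez \<omega>) * h (ey \<omega>))"
    "expectation (\<lambda>\<omega>. f (x \<omega>) * g (ez \<omega>) * h (ey \<omega>)) =
       expectation (\<lambda>\<omega>. f (x \<omega>)) * expectation (\<lambda>\<omega>. g (ez \<omega>)) * expectation (\<lambda>\<omega>. h (ey \<omega>))"
proof -
  define X :: "nat \<Rightarrow> 'a \<Rightarrow> real" where
    "X i = (if i = 0 then (\<lambda>\<omega>. f (x \<omega>)) else if i = 1 then (\<lambda>\<omega>. g (ez \<omega>)) else (\<lambda>\<omega>. h (ey \<omega>)))" for i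
  have X0: "X 0 = (\<lambda>\<omega>. f (x \<omega>))" and X1: "X 1 = (\<lambda>\<omega>. g (ez \<omega>))" and X2: "X 2 = (\<lambda>\<omega>. h (ey \<omega>))"
    by (simp_all add: X_def)
  have rv: "\<And>i. random_variable borel (X i)"
  proof -
    fix i
    have a: "random_variable borel (\<lambda>\<omega>. f (x \<omega>))" using measurable_compose[OF mx mf] by (simp add: comp_def)
    have b: "random_variable borel (\<lambda>\<omega>. g (ez \<omega>))" using measurable_compose[OF mz mg] by (simp add: comp_def)
    have c: "random_variable borel (\<lambda>\<omega>. h (ey \<omega>))" using measurable_compose[OF my mh] by (simp add: comp_def)
    show "random_variable borel (X i)" unfolding X_def using a b c by simp
  qed
  let ?F = "\<lambda>i. {X i -` A \<inter> space M | A. A \<in> sets borel}"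
  have Fev: "\<And>i. ?F i \<subseteq> events"
  proof
    fix i S assume "S \<in> ?F i"
    then obtain A where "A \<in> sets borel" "S = X i -` A \<inter> space M" by blast
    then show "S \<in> events" using measurable_sets[OF rv] by simp
  qed
  have Fsp: "\<And>i. space M \<in> ?F i"
  proof -
    fix i show "space M \<in> ?F i" by (rule CollectI, rule exI[of _ UNIV]) auto
  qed
  have pre: "\<And>(q::'e::topological_space \<Rightarrow> real) B. q \<in> borel_measurable borel \<Longrightarrow> B \<in> sets borel \<Longrightarrow> q -` B \<in> sets borel"
  proof -
    fix q :: "'e::topological_space \<Rightarrow> real" and B :: "real set"
    assume q: "q \<in> borel_measurable borel" and B: "B \<in> sets borel"
    have "q -` B \<inter> space borel \<in> sets borel" by (rule measurable_sets[OF q B])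
    then show "q -` B \<in> sets borel" by simp
  qed
  have "indep_sets ?F {0,1,2}"
  proof (subst indep_sets_finite)
    show "\<forall>A\<in>Pi {0,1,2} ?F. prob (\<Inter>j\<in>{0,1,2}. A j) = (\<Prod>j\<in>{0,1,2}. prob (A j))"
    proof
      fix A assume A: "A \<in> Pi {0,1,2} ?F"
      have "A 0 \<in> ?F 0" using A unfolding Pi_def by blast
      then obtain B0 where B0: "B0 \<in> sets borel" "A 0 = X 0 -` B0 \<inter> space M" by blast
      have "A 1 \<in> ?F 1" using A unfolding Pi_def by blast
      then obtain B1 where B1: "B1 \<in> sets borel" "A 1 = X 1 -` B1 \<inter> space M" by blast
      have "A 2 \<in> ?F 2" using A unfolding Pi_def by blast
      then obtain B2 where B2: "B2 \<in> sets borel" "A 2 = X 2 -` B2 \<inter> space M" by blast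
      have s0: "f -` B0 \<in> sets borel" using pre[OF mf B0(1)] .
      have s1: "g -` B1 \<in> sets borel" using pre[OF mg B1(1)] .
      have s2: "h -` B2 \<in> sets borel" using pre[OF mh B2(1)] .
      have "(\<Inter>j\<in>{0,1,2}. A j) = {\<omega>\<in>space M. x \<omega> \<in> f -` B0 \<and> ez \<omega> \<in> g -` B1 \<and> ey \<omega> \<in> h -` B2}"
        using B0(2) B1(2) B2(2) by (auto simp: X_def)
      moreover have "A 0 = {\<omega>\<in>space M. x \<omega> \<in> f -` B0}" using B0(2) by (auto simp: X0)
      moreover have "A 1 = {\<omega>\<in>space M. ez \<omega> \<in> g -` B1}" using B1(2) by (auto simp: X_def)
      moreover have "A 2 = {\<omega>\<in>space M. ey \<omega> \<in> h -` B2}" using B2(2) by (auto simp: X2)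
      ultimately show "prob (\<Inter>j\<in>{0,1,2}. A j) = (\<Prod>j\<in>{0,1,2}. prob (A j))"
        using ind[unfolded indep3_def, rule_format, OF s0 s1 s2] by (simp add: mult.assoc)
    qed
  next
    show "{0::nat,1,2} \<noteq> {}" by simp
    show "finite {0::nat,1,2}" by simp
    show "\<And>i. i \<in> {0,1,2} \<Longrightarrow> ?F i \<subseteq> events" by (rule Fev)
    show "\<And>i. i \<in> {0,1,2} \<Longrightarrow> space M \<in> ?F i" by (rule Fsp)
  qed
  then have indep: "indep_vars (\<lambda>_. borel) X {0,1,2}"
    unfolding indep_vars_def2 using rv by simp
  have int: "\<And>i. i \<in> {0,1,2} \<Longrightarrow> integrable M (X i)"
    using if_ ig ih by (auto simp: X_def)
  have prod: "\<And>\<omega>. (\<Prod>i\<in>{0::nat,1,2}. X i \<omega>) = f (x \<omega>) * g (ez \<omega>) * h (ey \<omega>)"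
    by (simp add: X_def)
  show "integrable M (\<lambda>\<omega>. f (x \<omega>) * g (ez \<omega>) * h (ey \<omega>))"
    using indep_vars_integrable[OF _ indep int] prod by simp
  show "expectation (\<lambda>\<omega>. f (x \<omega>) * g (ez \<omega>) * h (ey \<omega>)) =
       expectation (\<lambda>\<omega>. f (x \<omega>)) * expectation (\<lambda>\<omega>. g (ez \<omega>)) * expectation (\<lambda>\<omega>. h (ey \<omega>))"
    using indep_vars_lebesgue_integral[OF _ indep int] prod by (simp add: X_def mult.assoc)
qed

end

definition bil :: "('p::ab_group_add \<Rightarrow> 'p \<Rightarrow> real) \<Rightarrow> bool" where
  "bil B \<longleftrightarrow> (\<forall>p r c. B (p + r) c = B p c + B r c \<and> B (p - r) c = B p c - B r c \<and> B p r = B r p)"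

lemma bil_pp: assumes "bil B"
  shows "B (p + r) (p + r) = B p p + 2 * B p r + B r r"
    "B (p - r) (p - r) = B p p - 2 * B p r + B r r"
    "B (p + r) c = B p c + B r c" "B (p - r) c = B p c - B r c" "B p r = B r p"
proof -
  have l1: "\<And>p r c. B (p + r) c = B p c + B r c" using assms unfolding bil_def by blast
  have l2: "\<And>p r c. B (p - r) c = B p c - B r c" using assms unfolding bil_def by blast
  have s: "\<And>p r. B p r = B r p" using assms unfolding bil_def by blast
  note l = l1 l2
  show "B (p + r) (p + r) = B p p + 2 * B p r + B r r"
    using l(1)[of p r "p + r"] s[of p "p + r"] s[of r "p + r"] l(1)[of p r p] l(1)[of p r r] s[of r p] by simp
  show "B (p - r) (p - r) = B p p - 2 * B p r + B r r"
    using l(2)[of p r "p - r"] s[of p "p - r"] s[of r "p - r"] l(2)[of p r p] l(2)[of p r r] s[of r p] by simp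
  show "B (p + r) c = B p c + B r c" by (rule l(1))
  show "B (p - r) c = B p c - B r c" by (rule l(2))
  show "B p r = B r p" by (rule s)
qed

context prob_space begin

lemma polar2:
  fixes S :: "'p::ab_group_add \<Rightarrow> 'a \<Rightarrow> real"
  assumes add: "\<And>p r \<omega>. S (p + r) \<omega> = S p \<omega> + S r \<omega>"
    and diff: "\<And>p r \<omega>. S (p - r) \<omega> = S p \<omega> - S r \<omega>"
    and L2S: "\<And>p. L2 (S p)"
    and E2: "\<And>p. expectation (\<lambda>\<omega>. (S p \<omega>)^2) = B p p"
    and B: "bil B"
  shows "expectation (\<lambda>\<omega>. S p \<omega> * S r \<omega>) = B p r"
proof -
  have pt: "(\<lambda>\<omega>. S p \<omega> * S r \<omega>) = (\<lambda>\<omega>. ((S (p + r) \<omega>)^2 - (S (p - r) \<omega>)^2) / 4)"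
    by (simp add: fun_eq_iff add diff power2_eq_square algebra_simps)
  have i: "\<And>q. integrable M (\<lambda>\<omega>. (S q \<omega>)^2)" using L2S by (simp add: L2_def)
  have "expectation (\<lambda>\<omega>. ((S (p + r) \<omega>)^2 - (S (p - r) \<omega>)^2) / 4) = (B (p + r) (p + r) - B (p - r) (p - r)) / 4"
    using i[of "p + r"] i[of "p - r"] by (simp add: E2)
  then show ?thesis unfolding pt using bil_pp(1,2)[OF B, of p r] by simp
qed

lemma polar4:
  fixes S :: "'p::ab_group_add \<Rightarrow> 'a \<Rightarrow> real"
  assumes add: "\<And>p r \<omega>. S (p + r) \<omega> = S p \<omega> + S r \<omega>"
    and diff: "\<And>p r \<omega>. S (p - r) \<omega> = S p \<omega> - S r \<omega>"
    and meas: "\<And>p. S p \<in> borel_measurable M"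
    and int4: "\<And>p. integrable M (\<lambda>\<omega>. (S p \<omega>)^4)"
    and E4: "\<And>p. expectation (\<lambda>\<omega>. (S p \<omega>)^4) = 3 * (B p p)^2"
    and B: "bil B"
  shows "expectation (\<lambda>\<omega>. (S p \<omega>)^2 * (S r \<omega>)^2) = B p p * B r r + 2 * (B p r)^2"
proof -
  have L2sq: "\<And>q. L2 (\<lambda>\<omega>. (S q \<omega>)^2)" using L2_sq[OF meas int4] .
  have i22: "integrable M (\<lambda>\<omega>. (S p \<omega>)^2 * (S r \<omega>)^2)" using L2_mult[OF L2sq L2sq] .
  have pt: "(\<lambda>\<omega>. (S (p + r) \<omega>)^4 + (S (p - r) \<omega>)^4) =
     (\<lambda>\<omega>. 2 * (S p \<omega>)^4 + 12 * ((S p \<omega>)^2 * (S r \<omega>)^2) + 2 * (S r \<omega>)^4)"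
    by (simp add: fun_eq_iff add diff power2_eq_square power4_eq_xxxx algebra_simps)
  have "expectation (\<lambda>\<omega>. (S (p + r) \<omega>)^4 + (S (p - r) \<omega>)^4) = 3 * (B (p + r) (p + r))^2 + 3 * (B (p - r) (p - r))^2"
    using int4[of "p + r"] int4[of "p - r"] by (simp add: E4)
  moreover have "expectation (\<lambda>\<omega>. 2 * (S p \<omega>)^4 + 12 * ((S p \<omega>)^2 * (S r \<omega>)^2) + 2 * (S r \<omega>)^4)
     = 2 * (3 * (B p p)^2) + 12 * expectation (\<lambda>\<omega>. (S p \<omega>)^2 * (S r \<omega>)^2) + 2 * (3 * (B r r)^2)"
    using int4[of p] int4[of r] i22 by (simp add: E4)
  ultimately have "12 * expectation (\<lambda>\<omega>. (S p \<omega>)^2 * (S r \<omega>)^2) =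
      3 * (B (p + r) (p + r))^2 + 3 * (B (p - r) (p - r))^2 - 6 * (B p p)^2 - 6 * (B r r)^2"
    unfolding pt by linarith
  also have "\<dots> = 12 * (B p p * B r r + 2 * (B p r)^2)"
    unfolding bil_pp(1)[OF B, of p r] bil_pp(2)[OF B, of p r] by (simp add: power2_eq_square algebra_simps)
  finally show ?thesis by simp
qed

lemma polar3:
  fixes S :: "'p::ab_group_add \<Rightarrow> 'a \<Rightarrow> real"
  assumes add: "\<And>p r \<omega>. S (p + r) \<omega> = S p \<omega> + S r \<omega>"
    and diff: "\<And>p r \<omega>. S (p - r) \<omega> = S p \<omega> - S r \<omega>"
    and meas: "\<And>p. S p \<in> borel_measurable M"
    and int4: "\<And>p. integrable M (\<lambda>\<omega>. (S p \<omega>)^4)"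
    and E4: "\<And>p. expectation (\<lambda>\<omega>. (S p \<omega>)^4) = 3 * (B p p)^2"
    and B: "bil B"
  shows "expectation (\<lambda>\<omega>. S p \<omega> * S r \<omega> * (S c \<omega>)^2) = B p r * B c c + 2 * (B p c * B r c)"
proof -
  note P = polar4[OF add diff meas int4 E4 B]
  have L2sq: "\<And>q. L2 (\<lambda>\<omega>. (S q \<omega>)^2)" using L2_sq[OF meas int4] .
  have pt: "(\<lambda>\<omega>. S p \<omega> * S r \<omega> * (S c \<omega>)^2) =
      (\<lambda>\<omega>. ((S (p + r) \<omega>)^2 * (S c \<omega>)^2 - (S (p - r) \<omega>)^2 * (S c \<omega>)^2) / 4)"
    by (simp add: fun_eq_iff add diff power2_eq_square algebra_simps)
  have "expectation (\<lambda>\<omega>. ((S (p + r) \<omega>)^2 * (S c \<omega>)^2 - (S (p - r) \<omega>)^2 * (S c \<omega>)^2) / 4)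
     = (B (p + r) (p + r) * B c c + 2 * (B (p + r) c)^2 - (B (p - r) (p - r) * B c c + 2 * (B (p - r) c)^2)) / 4"
    using L2_mult[OF L2sq L2sq, of "p + r" c] L2_mult[OF L2sq L2sq, of "p - r" c] by (simp add: P)
  also have "\<dots> = B p r * B c c + 2 * (B p c * B r c)"
    unfolding bil_pp(1)[OF B, of p r] bil_pp(2)[OF B, of p r] bil_pp(3)[OF B, of p r c] bil_pp(4)[OF B, of p r c] by (simp add: power2_eq_square algebra_simps)
  finally show ?thesis unfolding pt .
qed

end

lemma sum4: "(\<Sum>k\<le>4. (f::nat\<Rightarrow>real) k) = f 0 + f 1 + f 2 + f 3 + f 4"
  by (simp add: numeral_eq_Suc atMost_Suc)
lemma sum2: "(\<Sum>k\<le>2. (f::nat\<Rightarrow>real) k) = f 0 + f 1 + f 2"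
  by (simp add: numeral_eq_Suc atMost_Suc)
lemma choose_vals: "(4::nat) choose 2 = 6" "(4::nat) choose 1 = 4" "(4::nat) choose 3 = 4" "(2::nat) choose 1 = 2"
  by (simp_all add: numeral_eq_Suc)

lemma binsum4: "(\<Sum>k\<le>4. of_nat (4 choose k) * ((f::nat\<Rightarrow>real) k * g (4 - k))) =
   f 0 * g 4 + 4 * (f 1 * g 3) + 6 * (f 2 * g 2) + 4 * (f 3 * g 1) + f 4 * g 0"
  by (simp add: sum4 choose_vals)
lemma binsum2: "(\<Sum>k\<le>2. of_nat (2 choose k) * ((f::nat\<Rightarrow>real) k * g (2 - k))) =
   f 0 * g 2 + 2 * (f 1 * g 1) + f 2 * g 0"
  by (simp add: sum2 choose_vals)

context prob_space begin

lemma UW_moments: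
  fixes x :: "'a \<Rightarrow> real^'n" and ez :: "'a \<Rightarrow> real^'m" and ey :: "'a \<Rightarrow> real^'k"
    and h :: "real^'k \<Rightarrow> real"
  assumes ind: "indep3 M x ez ey"
    and mx: "x \<in> borel_measurable M" and mz: "ez \<in> borel_measurable M" and my: "ey \<in> borel_measurable M"
    and gU: "\<And>u. real_gaussian M (\<lambda>\<omega>. u \<bullet> x \<omega>) 0 (qU u)"
    and gW: "\<And>w. real_gaussian M (\<lambda>\<omega>. w \<bullet> ez \<omega>) 0 (qW w)"
    and mh: "h \<in> borel_measurable borel" and ih: "integrable M (\<lambda>\<omega>. h (ey \<omega>))"
  shows "integrable M (\<lambda>\<omega>. (u \<bullet> x \<omega> + w \<bullet> ez \<omega>)^n * h (ey \<omega>))"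
    "expectation (\<lambda>\<omega>. (u \<bullet> x \<omega> + w \<bullet> ez \<omega>)^n * h (ey \<omega>)) =
      (\<Sum>k\<le>n. of_nat (n choose k) * (expectation (\<lambda>\<omega>. (u \<bullet> x \<omega>)^k) * expectation (\<lambda>\<omega>. (w \<bullet> ez \<omega>)^(n-k))))
        * expectation (\<lambda>\<omega>. h (ey \<omega>))"
proof -
  have iU: "\<And>k. integrable M (\<lambda>\<omega>. (u \<bullet> x \<omega>)^k)" using gauss_mom(3)[OF gU[of u]] by simp
  have iW: "\<And>k. integrable M (\<lambda>\<omega>. (w \<bullet> ez \<omega>)^k)" using gauss_mom(3)[OF gW[of w]] by simp
  have mf: "\<And>k. (\<lambda>v::real^'n. (u \<bullet> v)^k) \<in> borel_measurable borel" by measurable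
  have mg: "\<And>k. (\<lambda>v::real^'m. (w \<bullet> v)^k) \<in> borel_measurable borel" by measurable
  note I = indep3_prod[OF ind mx mz my mf mg mh iU iW ih]
  have pt: "(\<lambda>\<omega>. (u \<bullet> x \<omega> + w \<bullet> ez \<omega>)^n * h (ey \<omega>)) =
     (\<lambda>\<omega>. \<Sum>k\<le>n. of_nat (n choose k) * ((u \<bullet> x \<omega>)^k * (w \<bullet> ez \<omega>)^(n-k) * h (ey \<omega>)))"
    by (simp add: fun_eq_iff binomial_ring sum_distrib_right sum_distrib_left mult_ac)
  have it: "\<And>k. integrable M (\<lambda>\<omega>. of_nat (n choose k) * ((u \<bullet> x \<omega>)^k * (w \<bullet> ez \<omega>)^(n-k) * h (ey \<omega>)))"
    using I(1) by simp
  show "integrable M (\<lambda>\<omega>. (u \<bullet> x \<omega> + w \<bullet> ez \<omega>)^n * h (ey \<omega>))"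
    unfolding pt by (rule Bochner_Integration.integrable_sum) (rule it)
  show "expectation (\<lambda>\<omega>. (u \<bullet> x \<omega> + w \<bullet> ez \<omega>)^n * h (ey \<omega>)) =
      (\<Sum>k\<le>n. of_nat (n choose k) * (expectation (\<lambda>\<omega>. (u \<bullet> x \<omega>)^k) * expectation (\<lambda>\<omega>. (w \<bullet> ez \<omega>)^(n-k))))
        * expectation (\<lambda>\<omega>. h (ey \<omega>))"
  proof -
    have "expectation (\<lambda>\<omega>. \<Sum>k\<le>n. of_nat (n choose k) * ((u \<bullet> x \<omega>)^k * (w \<bullet> ez \<omega>)^(n-k) * h (ey \<omega>)))
      = (\<Sum>k\<le>n. expectation (\<lambda>\<omega>. of_nat (n choose k) * ((u \<bullet> x \<omega>)^k * (w \<bullet> ez \<omega>)^(n-k) * h (ey \<omega>))))"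
      by (rule Bochner_Integration.integral_sum) (rule it)
    also have "\<dots> = (\<Sum>k\<le>n. of_nat (n choose k) * (expectation (\<lambda>\<omega>. (u \<bullet> x \<omega>)^k) * expectation (\<lambda>\<omega>. (w \<bullet> ez \<omega>)^(n-k)) * expectation (\<lambda>\<omega>. h (ey \<omega>))))"
      by (simp only: Bochner_Integration.integral_mult_right_zero I(2))
    finally show ?thesis unfolding pt by (simp add: sum_distrib_left sum_distrib_right mult_ac)
  qed
qed

lemma cgauss_vals:
  assumes "real_gaussian M Y 0 q"
  shows "expectation (\<lambda>\<omega>. (Y \<omega>)^0) = 1" "expectation (\<lambda>\<omega>. (Y \<omega>)^1) = 0"
    "expectation (\<lambda>\<omega>. (Y \<omega>)^2) = q" "expectation (\<lambda>\<omega>. (Y \<omega>)^3) = 0"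
    "expectation (\<lambda>\<omega>. (Y \<omega>)^4) = 3 * q^2"
  using gauss_mom[OF assms] by (simp_all add: prob_space)

end

theorem mainTheorem7:
  fixes M :: "'s measure"
    and A :: "real^'n^'m"
    and \<sigma>x :: real
    and Cez Cey :: "real^'m^'m"
    and eybar :: "real^'m"
    and x :: "'s \<Rightarrow> real^'n"
    and ez ey :: "'s \<Rightarrow> real^'m"
  assumes P: "prob_space M"
    and gx: "gaussian_vec M x 0 (\<sigma>x^2 *\<^sub>R mat 1)"
    and gez: "gaussian_vec M ez 0 Cez"
    and gey: "gaussian_vec M ey eybar Cey"
    and ind: "indep3 M x ez ey"
  defines "y \<equiv> (\<lambda>\<omega>. \<chi> m. ((A *v x \<omega> + ez \<omega>) $ m)^2 + ey \<omega> $ m)"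
    and "Cz \<equiv> \<sigma>x^2 *\<^sub>R (A ** transpose A) + Cez"
  defines "ybar \<equiv> (\<chi> m. Cz $ m $ m) + eybar"
    and "T \<equiv> (\<chi> m m'. 2 * (Cz $ m $ m' * Cz $ m $ m')) + Cey"
  defines "t \<equiv> (\<lambda>\<omega>. matrix_inv T *v (y \<omega> - ybar))"
    and "V \<equiv> (\<lambda>m. (2 * \<sigma>x^4) *\<^sub>R outer (A $ m) (A $ m))"
  defines "D \<equiv> (\<lambda>\<omega>. \<sigma>x^2 *\<^sub>R mat 1 + (\<Sum>m\<in>UNIV. t \<omega> $ m *\<^sub>R V m))"
    and "mse \<equiv> (\<lambda>E :: 's \<Rightarrow> real^'n^'n.
                 prob_space.expectation M (\<lambda>\<omega>. frob_sq (E \<omega> - outer (x \<omega>) (x \<omega>))))"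
  assumes Tinv: "invertible T"
  shows "(\<exists>W0 W. \<forall>\<omega>. D \<omega> = W0 + (\<Sum>m\<in>UNIV. y \<omega> $ m *\<^sub>R W m))
         \<and> (\<forall>(W0 :: real^'n^'n) (W :: 'm \<Rightarrow> real^'n^'n).
               mse D \<le> mse (\<lambda>\<omega>. W0 + (\<Sum>m\<in>UNIV. y \<omega> $ m *\<^sub>R W m))
             \<and> (mse (\<lambda>\<omega>. W0 + (\<Sum>m\<in>UNIV. y \<omega> $ m *\<^sub>R W m)) = mse D
                  \<longrightarrow> (AE \<omega> in M. W0 + (\<Sum>m\<in>UNIV. y \<omega> $ m *\<^sub>R W m) = D \<omega>)))
         \<and> mse D = prob_space.expectation M
                      (\<lambda>\<omega>. frob_sq (outer (x \<omega>) (x \<omega>) - \<sigma>x^2 *\<^sub>R mat 1))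
                    - (\<Sum>m\<in>UNIV. \<Sum>m'\<in>UNIV. matrix_inv T $ m $ m' * trace (transpose (V m) ** V m'))"
proof -
  interpret P: prob_space M by (rule P)
  have mx: "x \<in> borel_measurable M" using gx by (simp add: gaussian_vec_def)
  have mz: "ez \<in> borel_measurable M" using gez by (simp add: gaussian_vec_def)
  have my: "ey \<in> borel_measurable M" using gey by (simp add: gaussian_vec_def)
  note mx[measurable] mz[measurable] my[measurable]
  have gxu: "\<And>u. real_gaussian M (\<lambda>\<omega>. u \<bullet> x \<omega>) 0 (\<sigma>x^2 * (u \<bullet> u))"
  proof -
    fix u :: "real^'n"
    have "real_gaussian M (\<lambda>\<omega>. u \<bullet> x \<omega>) (u \<bullet> 0) (u \<bullet> ((\<sigma>x^2 *\<^sub>R mat 1) *v u))"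
      using gx by (simp add: gaussian_vec_def)
    moreover have "(\<sigma>x^2 *\<^sub>R mat 1) *v u = \<sigma>x^2 *\<^sub>R u"
      by (simp add: scaleR_matrix_vector_assoc[symmetric])
    ultimately show "real_gaussian M (\<lambda>\<omega>. u \<bullet> x \<omega>) 0 (\<sigma>x^2 * (u \<bullet> u))" by simp
  qed
  have gzu: "\<And>w. real_gaussian M (\<lambda>\<omega>. w \<bullet> ez \<omega>) 0 (w \<bullet> (Cez *v w))"
    using gez by (simp add: gaussian_vec_def)
  have gyu: "\<And>v. real_gaussian M (\<lambda>\<omega>. v \<bullet> ey \<omega>) (v \<bullet> eybar) (v \<bullet> (Cey *v v))"
    using gey by (simp add: gaussian_vec_def)
  have symC: "\<And>(C::real^'m^'m) w w'. transpose C = C \<Longrightarrow> w \<bullet> (C *v w') = w' \<bullet> (C *v w)"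
  proof -
    fix C :: "real^'m^'m" and w w' :: "real^'m"
    assume tC: "transpose C = C"
    have "w \<bullet> (C *v w') = (w v* C) \<bullet> w'" by (simp add: dot_lmul_matrix)
    also have "\<dots> = (transpose C *v w) \<bullet> w'" by (simp add: transpose_matrix_vector)
    also have "\<dots> = w' \<bullet> (C *v w)" using tC by (simp add: inner_commute)
    finally show "w \<bullet> (C *v w') = w' \<bullet> (C *v w)" .
  qed
  have Cez_sym: "\<And>w w'. w \<bullet> (Cez *v w') = w' \<bullet> (Cez *v w)"
    using gez symC by (simp add: gaussian_vec_def)
  have Cey_sym: "\<And>w w'. w \<bullet> (Cey *v w') = w' \<bullet> (Cey *v w)"
    using gey symC by (simp add: gaussian_vec_def)

  define S where "S = (\<lambda>(p::(real^'n) \<times> (real^'m)) \<omega>. fst p \<bullet> x \<omega> + snd p \<bullet> ez \<omega>)"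
  define B where "B = (\<lambda>(p::(real^'n) \<times> (real^'m)) r. \<sigma>x^2 * (fst p \<bullet> fst r) + snd p \<bullet> (Cez *v snd r))"
  have bilB: "bil B"
    unfolding bil_def
  proof (intro allI conjI)
    fix p r c :: "(real^'n) \<times> (real^'m)"
    show "B (p + r) c = B p c + B r c" by (simp add: B_def inner_add_left algebra_simps)
    show "B (p - r) c = B p c - B r c" by (simp add: B_def inner_diff_left algebra_simps)
    show "B p r = B r p" using Cez_sym[of "snd p" "snd r"] by (simp add: B_def inner_commute)
  qed
  have Sadd: "\<And>p r \<omega>. S (p + r) \<omega> = S p \<omega> + S r \<omega>" by (simp add: S_def inner_add_left)
  have Sdiff: "\<And>p r \<omega>. S (p - r) \<omega> = S p \<omega> - S r \<omega>" by (simp add: S_def inner_diff_left)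
  have Smeas: "\<And>p. S p \<in> borel_measurable M" unfolding S_def by measurable
  have one_int: "integrable M (\<lambda>\<omega>. (\<lambda>_::real^'m. 1::real) (ey \<omega>))" by simp
  have one_meas: "(\<lambda>_::real^'m. 1::real) \<in> borel_measurable borel" by simp
  note UW1 = P.UW_moments[OF ind mx mz my gxu gzu one_meas one_int]
  note cgU = P.cgauss_vals[OF gxu] and cgW = P.cgauss_vals[OF gzu]
  have S4i: "\<And>p. integrable M (\<lambda>\<omega>. (S p \<omega>)^4)"
    using UW1(1) by (simp add: S_def split_beta)
  have S2i: "\<And>p. integrable M (\<lambda>\<omega>. (S p \<omega>)^2)"
    using UW1(1) by (simp add: S_def split_beta)
  have S4: "\<And>p. P.expectation (\<lambda>\<omega>. (S p \<omega>)^4) = 3 * (B p p)^2"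
  proof -
    fix p :: "(real^'n) \<times> (real^'m)"
    have "P.expectation (\<lambda>\<omega>. (S p \<omega>)^4) = (\<Sum>k\<le>4. of_nat (4 choose k) * (P.expectation (\<lambda>\<omega>. (fst p \<bullet> x \<omega>)^k) * P.expectation (\<lambda>\<omega>. (snd p \<bullet> ez \<omega>)^(4-k))))"
      using UW1(2)[of "fst p" "snd p" 4] by (simp add: S_def split_beta P.prob_space)
    also have "\<dots> = 3 * (B p p)^2"
      unfolding binsum4[where f="\<lambda>k. P.expectation (\<lambda>\<omega>. (fst p \<bullet> x \<omega>)^k)" and g="\<lambda>k. P.expectation (\<lambda>\<omega>. (snd p \<bullet> ez \<omega>)^k)"] cgU cgW
      by (simp add: B_def power2_eq_square algebra_simps)
    finally show "P.expectation (\<lambda>\<omega>. (S p \<omega>)^4) = 3 * (B p p)^2" .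
  qed
  have S2: "\<And>p. P.expectation (\<lambda>\<omega>. (S p \<omega>)^2) = B p p"
  proof -
    fix p :: "(real^'n) \<times> (real^'m)"
    have "P.expectation (\<lambda>\<omega>. (S p \<omega>)^2) = (\<Sum>k\<le>2. of_nat (2 choose k) * (P.expectation (\<lambda>\<omega>. (fst p \<bullet> x \<omega>)^k) * P.expectation (\<lambda>\<omega>. (snd p \<bullet> ez \<omega>)^(2-k))))"
      using UW1(2)[of "fst p" "snd p" 2] by (simp add: S_def split_beta P.prob_space)
    also have "\<dots> = B p p"
      unfolding binsum2[where f="\<lambda>k. P.expectation (\<lambda>\<omega>. (fst p \<bullet> x \<omega>)^k)" and g="\<lambda>k. P.expectation (\<lambda>\<omega>. (snd p \<bullet> ez \<omega>)^k)"] cgU cgW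
      by (simp add: B_def)
    finally show "P.expectation (\<lambda>\<omega>. (S p \<omega>)^2) = B p p" .
  qed
  have SL2: "\<And>p. P.L2 (S p)" using Smeas S2i by (simp add: P.L2_def)
  have SsqL2: "\<And>p. P.L2 (\<lambda>\<omega>. (S p \<omega>)^2)" by (rule P.L2_sq[OF Smeas S4i])
  note PS2 = P.polar2[OF Sadd Sdiff SL2 S2 bilB]
  note PS4 = P.polar4[OF Sadd Sdiff Smeas S4i S4 bilB]
  note PS3 = P.polar3[OF Sadd Sdiff Smeas S4i S4 bilB]

  define S' where "S' = (\<lambda>(v::real^'m) \<omega>. v \<bullet> ey \<omega> - v \<bullet> eybar)"
  define B' where "B' = (\<lambda>(v::real^'m) w. v \<bullet> (Cey *v w))"
  have bilB': "bil B'"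
    unfolding bil_def
  proof (intro allI conjI)
    fix p r c :: "real^'m"
    show "B' (p + r) c = B' p c + B' r c" by (simp add: B'_def inner_add_left)
    show "B' (p - r) c = B' p c - B' r c" by (simp add: B'_def inner_diff_left)
    show "B' p r = B' r p" using Cey_sym[of p r] by (simp add: B'_def)
  qed
  have S'add: "\<And>p r \<omega>. S' (p + r) \<omega> = S' p \<omega> + S' r \<omega>" by (simp add: S'_def inner_add_left)
  have S'diff: "\<And>p r \<omega>. S' (p - r) \<omega> = S' p \<omega> - S' r \<omega>" by (simp add: S'_def inner_diff_left)
  have S'L2: "\<And>v. P.L2 (S' v)"
    using P.gauss_mom(3)[OF gyu, of _ 2] unfolding P.L2_def S'_def by simp
  have S'2: "\<And>v. P.expectation (\<lambda>\<omega>. (S' v \<omega>)^2) = B' v v"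
    using P.gauss_mom(5)[OF gyu] unfolding S'_def B'_def by simp
  have S'1: "\<And>v. P.expectation (S' v) = 0"
    using P.gauss_mom(4)[OF gyu] unfolding S'_def by simp
  note PE = P.polar2[OF S'add S'diff S'L2 S'2 bilB']
  have eyc: "\<And>k. (\<lambda>\<omega>. ey \<omega> $ k) = (\<lambda>\<omega>. S' (axis k 1) \<omega> + eybar $ k)"
    by (simp add: fun_eq_iff S'_def inner_axis')
  have L2ey: "\<And>k. P.L2 (\<lambda>\<omega>. ey \<omega> $ k)"
    unfolding eyc by (intro P.L2_add S'L2 P.L2_const)
  have Eey: "\<And>k. P.expectation (\<lambda>\<omega>. ey \<omega> $ k) = eybar $ k"
    unfolding eyc using P.L2_integrable[OF S'L2] S'1 by (simp add: P.prob_space)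
  have Eeyey: "\<And>m k. P.expectation (\<lambda>\<omega>. ey \<omega> $ m * ey \<omega> $ k) = Cey $ m $ k + eybar $ m * eybar $ k"
  proof -
    fix m k
    have "(\<lambda>\<omega>. ey \<omega> $ m * ey \<omega> $ k) = (\<lambda>\<omega>. S' (axis m 1) \<omega> * S' (axis k 1) \<omega> +
         (eybar $ k * S' (axis m 1) \<omega> + (eybar $ m * S' (axis k 1) \<omega> + eybar $ m * eybar $ k)))"
      by (simp add: fun_eq_iff S'_def inner_axis' algebra_simps)
    moreover have "integrable M (\<lambda>\<omega>. S' (axis m 1) \<omega> * S' (axis k 1) \<omega>)" by (rule P.L2_mult[OF S'L2 S'L2])
    moreover have "B' (axis m 1) (axis k 1) = Cey $ m $ k"
      by (simp add: B'_def inner_axis' matrix_vector_mul_component inner_axis)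
    ultimately show "P.expectation (\<lambda>\<omega>. ey \<omega> $ m * ey \<omega> $ k) = Cey $ m $ k + eybar $ m * eybar $ k"
      using P.L2_integrable[OF S'L2] S'1 PE by (simp add: P.prob_space)
  qed

  have ISe: "\<And>p k. P.expectation (\<lambda>\<omega>. (S p \<omega>)^2 * ey \<omega> $ k) = B p p * eybar $ k"
  proof -
    fix p :: "(real^'n) \<times> (real^'m)" and k
    have mh: "(\<lambda>v::real^'m. v $ k) \<in> borel_measurable borel" by measurable
    have ih: "integrable M (\<lambda>\<omega>. (\<lambda>v::real^'m. v $ k) (ey \<omega>))" using P.L2_integrable[OF L2ey] by simp
    note U = P.UW_moments[OF ind mx mz my gxu gzu mh ih]
    have "P.expectation (\<lambda>\<omega>. (S p \<omega>)^2 * ey \<omega> $ k) = (\<Sum>k\<le>2. of_nat (2 choose k) * (P.expectation (\<lambda>\<omega>. (fst p \<bullet> x \<omega>)^k) * P.expectation (\<lambda>\<omega>. (snd p \<bullet> ez \<omega>)^(2-k)))) * eybar $ k"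
      using U(2)[of "fst p" "snd p" 2] by (simp add: S_def split_beta Eey)
    also have "\<dots> = B p p * eybar $ k"
      unfolding binsum2[where f="\<lambda>k. P.expectation (\<lambda>\<omega>. (fst p \<bullet> x \<omega>)^k)" and g="\<lambda>k. P.expectation (\<lambda>\<omega>. (snd p \<bullet> ez \<omega>)^k)"] cgU cgW
      by (simp add: B_def)
    finally show "P.expectation (\<lambda>\<omega>. (S p \<omega>)^2 * ey \<omega> $ k) = B p p * eybar $ k" .
  qed
  have xc: "\<And>i \<omega>. x \<omega> $ i = S (axis i 1, 0) \<omega>" by (simp add: S_def inner_axis')
  have IFe: "\<And>i j k. P.expectation (\<lambda>\<omega>. S (axis i 1, 0) \<omega> * S (axis j 1, 0) \<omega> * ey \<omega> $ k) =
       B (axis i 1, 0) (axis j 1, 0) * eybar $ k"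
  proof -
    fix i j :: 'n and k :: 'm
    have mf: "(\<lambda>v::real^'n. v $ i * v $ j) \<in> borel_measurable borel" by measurable
    have mh: "(\<lambda>v::real^'m. v $ k) \<in> borel_measurable borel" by measurable
    have mg: "(\<lambda>v::real^'m. 1::real) \<in> borel_measurable borel" by simp
    have if_: "integrable M (\<lambda>\<omega>. (\<lambda>v::real^'n. v $ i * v $ j) (x \<omega>))"
      using P.L2_mult[OF SL2 SL2, of "(axis i 1, 0)" "(axis j 1, 0)"] by (simp add: xc)
    have ig: "integrable M (\<lambda>\<omega>. (\<lambda>v::real^'m. 1::real) (ez \<omega>))" by simp
    have ih: "integrable M (\<lambda>\<omega>. (\<lambda>v::real^'m. v $ k) (ey \<omega>))" using P.L2_integrable[OF L2ey] by simp
    note I = P.indep3_prod(2)[OF ind mx mz my mf mg mh if_ ig ih]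
    then show "P.expectation (\<lambda>\<omega>. S (axis i 1, 0) \<omega> * S (axis j 1, 0) \<omega> * ey \<omega> $ k) =
       B (axis i 1, 0) (axis j 1, 0) * eybar $ k"
      by (simp add: xc PS2 Eey P.prob_space)
  qed

  have Bee: "\<And>i j. B (axis i 1, 0) (axis j 1, 0) = \<sigma>x^2 * (if i = j then 1 else 0)"
    by (simp add: B_def inner_axis_axis)
  have Bec: "\<And>i m. B (axis i 1, 0) (A $ m, axis m 1) = \<sigma>x^2 * A $ m $ i"
    by (simp add: B_def inner_axis')
  have Bcc: "\<And>m k. B (A $ m, axis m 1) (A $ k, axis k 1) = Cz $ m $ k"
  proof -
    fix m k
    have h1: "A $ m \<bullet> A $ k = (A ** transpose A) $ m $ k"
      by (simp add: matrix_matrix_mult_def transpose_def inner_vec_def)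
    have h2: "axis m 1 \<bullet> (Cez *v axis k 1) = Cez $ m $ k"
      by (simp add: inner_axis' matrix_vector_mul_component inner_axis)
    show "B (A $ m, axis m 1) (A $ k, axis k 1) = Cz $ m $ k"
      by (simp add: B_def Cz_def h1 h2)
  qed

  have yc: "\<And>m. (\<lambda>\<omega>. y \<omega> $ m) = (\<lambda>\<omega>. (S (A $ m, axis m 1) \<omega>)^2 + ey \<omega> $ m)"
    by (simp add: fun_eq_iff y_def S_def matrix_vector_mul_component inner_axis')
  have Fc: "\<And>i j. (\<lambda>\<omega>. outer (x \<omega>) (x \<omega>) $ i $ j) = (\<lambda>\<omega>. S (axis i 1, 0) \<omega> * S (axis j 1, 0) \<omega>)"
    by (simp add: fun_eq_iff outer_def xc)
  have L2Y: "\<And>m. P.L2 (\<lambda>\<omega>. y \<omega> $ m)"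
    unfolding yc by (intro P.L2_add SsqL2 L2ey)
  have L2F: "\<And>i j. P.L2 (\<lambda>\<omega>. outer (x \<omega>) (x \<omega>) $ i $ j)"
    unfolding Fc P.L2_def
  proof (intro allI conjI)
    fix i j
    show "(\<lambda>\<omega>. S (axis i 1, 0) \<omega> * S (axis j 1, 0) \<omega>) \<in> borel_measurable M"
      using Smeas by (intro borel_measurable_times) auto
    show "integrable M (\<lambda>\<omega>. (S (axis i 1, 0) \<omega> * S (axis j 1, 0) \<omega>)^2)"
      using P.L2_mult[OF SsqL2 SsqL2, of "(axis i 1, 0)" "(axis j 1, 0)"] by (simp add: power_mult_distrib)
  qed
  have EY: "\<And>m. P.expectation (\<lambda>\<omega>. y \<omega> $ m) = ybar $ m"
    unfolding yc using S2i P.L2_integrable[OF L2ey] by (simp add: S2 Eey Bcc ybar_def)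
  have EF: "\<And>i j. P.expectation (\<lambda>\<omega>. outer (x \<omega>) (x \<omega>) $ i $ j) = (\<sigma>x^2 *\<^sub>R mat 1) $ i $ j"
    unfolding Fc by (simp add: PS2 Bee mat_def)
  have EYY: "\<And>m k. P.expectation (\<lambda>\<omega>. y \<omega> $ m * y \<omega> $ k) = T $ m $ k + ybar $ m * ybar $ k"
  proof -
    fix m k
    have pt: "(\<lambda>\<omega>. y \<omega> $ m * y \<omega> $ k) = (\<lambda>\<omega>. (S (A $ m, axis m 1) \<omega>)^2 * (S (A $ k, axis k 1) \<omega>)^2 +
        ((S (A $ m, axis m 1) \<omega>)^2 * ey \<omega> $ k + ((S (A $ k, axis k 1) \<omega>)^2 * ey \<omega> $ m + ey \<omega> $ m * ey \<omega> $ k)))"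
      using yc[of m] yc[of k] by (simp add: fun_eq_iff algebra_simps)
    have i1: "integrable M (\<lambda>\<omega>. (S (A $ m, axis m 1) \<omega>)^2 * (S (A $ k, axis k 1) \<omega>)^2)"
      by (rule P.L2_mult[OF SsqL2 SsqL2])
    have i2: "integrable M (\<lambda>\<omega>. (S (A $ m, axis m 1) \<omega>)^2 * ey \<omega> $ k)"
      by (rule P.L2_mult[OF SsqL2 L2ey])
    have i3: "integrable M (\<lambda>\<omega>. (S (A $ k, axis k 1) \<omega>)^2 * ey \<omega> $ m)"
      by (rule P.L2_mult[OF SsqL2 L2ey])
    have i4: "integrable M (\<lambda>\<omega>. ey \<omega> $ m * ey \<omega> $ k)"
      by (rule P.L2_mult[OF L2ey L2ey])
    have "P.expectation (\<lambda>\<omega>. y \<omega> $ m * y \<omega> $ k) =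
       P.expectation (\<lambda>\<omega>. (S (A $ m, axis m 1) \<omega>)^2 * (S (A $ k, axis k 1) \<omega>)^2) +
        (P.expectation (\<lambda>\<omega>. (S (A $ m, axis m 1) \<omega>)^2 * ey \<omega> $ k) +
         (P.expectation (\<lambda>\<omega>. (S (A $ k, axis k 1) \<omega>)^2 * ey \<omega> $ m) +
          P.expectation (\<lambda>\<omega>. ey \<omega> $ m * ey \<omega> $ k)))"
      unfolding pt by (simp only: Bochner_Integration.integral_add Bochner_Integration.integrable_add i1 i2 i3 i4)
    also have "\<dots> = (B (A $ m, axis m 1) (A $ m, axis m 1) * B (A $ k, axis k 1) (A $ k, axis k 1) + 2 * (B (A $ m, axis m 1) (A $ k, axis k 1))^2)
        + (B (A $ m, axis m 1) (A $ m, axis m 1) * eybar $ k + (B (A $ k, axis k 1) (A $ k, axis k 1) * eybar $ m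
        + (Cey $ m $ k + eybar $ m * eybar $ k)))"
      by (simp only: PS4 ISe Eeyey)
    also have "\<dots> = T $ m $ k + ybar $ m * ybar $ k"
      by (simp add: Bcc T_def ybar_def power2_eq_square algebra_simps)
    finally show "P.expectation (\<lambda>\<omega>. y \<omega> $ m * y \<omega> $ k) = T $ m $ k + ybar $ m * ybar $ k" .
  qed
  have EFY: "\<And>i j m. P.expectation (\<lambda>\<omega>. outer (x \<omega>) (x \<omega>) $ i $ j * y \<omega> $ m) =
        (\<sigma>x^2 *\<^sub>R mat 1) $ i $ j * ybar $ m + V m $ i $ j"
  proof -
    fix i j m
    have pt: "(\<lambda>\<omega>. outer (x \<omega>) (x \<omega>) $ i $ j * y \<omega> $ m) = (\<lambda>\<omega>. S (axis i 1, 0) \<omega> * S (axis j 1, 0) \<omega> * (S (A $ m, axis m 1) \<omega>)^2 +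
        S (axis i 1, 0) \<omega> * S (axis j 1, 0) \<omega> * ey \<omega> $ m)"
      using yc[of m] Fc[of i j] by (simp add: fun_eq_iff algebra_simps)
    have i1: "integrable M (\<lambda>\<omega>. S (axis i 1, 0) \<omega> * S (axis j 1, 0) \<omega> * (S (A $ m, axis m 1) \<omega>)^2)"
      using P.L2_mult[OF L2F[unfolded Fc] SsqL2, of i j "(A $ m, axis m 1)"] by simp
    have i2: "integrable M (\<lambda>\<omega>. S (axis i 1, 0) \<omega> * S (axis j 1, 0) \<omega> * ey \<omega> $ m)"
      using P.L2_mult[OF L2F[unfolded Fc] L2ey, of i j m] by simp
    have "P.expectation (\<lambda>\<omega>. outer (x \<omega>) (x \<omega>) $ i $ j * y \<omega> $ m) =
        P.expectation (\<lambda>\<omega>. S (axis i 1, 0) \<omega> * S (axis j 1, 0) \<omega> * (S (A $ m, axis m 1) \<omega>)^2) +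
        P.expectation (\<lambda>\<omega>. S (axis i 1, 0) \<omega> * S (axis j 1, 0) \<omega> * ey \<omega> $ m)"
      unfolding pt by (simp only: Bochner_Integration.integral_add i1 i2)
    also have "\<dots> = (B (axis i 1, 0) (axis j 1, 0) * B (A $ m, axis m 1) (A $ m, axis m 1)
         + 2 * (B (axis i 1, 0) (A $ m, axis m 1) * B (axis j 1, 0) (A $ m, axis m 1)))
         + B (axis i 1, 0) (axis j 1, 0) * eybar $ m"
      by (simp only: PS3 IFe)
    also have "\<dots> = (\<sigma>x^2 *\<^sub>R mat 1) $ i $ j * ybar $ m + V m $ i $ j"
      by (simp add: Bee Bec Bcc mat_def V_def outer_def ybar_def power2_eq_square power4_eq_xxxx algebra_simps)
    finally show "P.expectation (\<lambda>\<omega>. outer (x \<omega>) (x \<omega>) $ i $ j * y \<omega> $ m) =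
        (\<sigma>x^2 *\<^sub>R mat 1) $ i $ j * ybar $ m + V m $ i $ j" .
  qed
  have Ddef: "D = (\<lambda>\<omega>. \<sigma>x^2 *\<^sub>R mat 1 + (\<Sum>m\<in>UNIV. (matrix_inv T *v (y \<omega> - ybar)) $ m *\<^sub>R V m))"
    unfolding D_def t_def by (rule refl)
  note L = P.lmmse[where Y = y and F = "\<lambda>\<omega>. outer (x \<omega>) (x \<omega>)", OF L2Y L2F EY EF EYY EFY Tinv Ddef]
  show ?thesis unfolding mse_def using L by blast
qed


end
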